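(* Let $\{G_n:\{0,1\}^n\to\{0,1\}^{N}\}$ (with $N=N(n)$) be a demi-bits generator, and for each $n$ let $\mathcal{H}_n=\{h:\{0,1\}^N\to\{0,1\}^m\}$ (with $m=m(n)$) be a family of pairwise independent hash functions, indexed by keys of length $\mathrm{poly}(n)$ and evaluable in polynomial time. Let $\mathcal{A}$ be a nondeterministic polynomial-time algorithm. If $N>10m$ and $m>n$, then (for all sufficiently large $n$) there exists $h\in\mathcal{H}_n$ such that $\mathcal{A}$ fails to solve the range avoidance problem on the input circuit $h\circ G_n:\{0,1\}^n\to\{0,1\}^m$.
   Context: Range avoidance: given a circuit $C:\{0,1\}^a\to\{0,1\}^b$ with $b>a$, output some $y\notin\mathrm{Range}(C)$. A nondeterministic algorithm $\mathcal{A}$ solves range avoidance on input $C$ if $\mathcal{A}(C)$ has at least one accepting computation path and every accepting path outputs a string not in $\mathrm{Range}(C)$; otherwise it fails on $C$. A family of hash functions $\mathcal{H}=\{h:\{0,1\}^N\to\{0,1\}^m\}$ is pairwise independent if for all distinct $y,y'$ and all $z,z'$, $\Pr_{h\sim\mathcal{H}}[h(y)=z\wedge h(y')=z']=2^{-2m}$. A family $\{G_n:\{0,1\}^n\to\{0,1\}^{N(n)}\}$ with $N(n)>n$, computable by polynomial-size circuits, is a demi-bits generator (secure against $\mathbf{NP}/\mathrm{poly}$) if for every family $\{D\}$ of polynomial-size nondeterministic circuits and all sufficiently large $n$, it is not the case that both $\Pr_{y\sim\{0,1\}^{N(n)}}[D(y)=1]\ge 1/3$ and $D(G_n(x))=0$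 for all $x\in\{0,1\}^n$. *)

theory Defs
  imports Complex_Main
begin

text \<open>Wires 0..cin-1 are the inputs; gate number j defines wire cin+j.\<close>

datatype gate = GConst bool | GNot nat | GAnd nat nat | GOr nat nat

record circuit =
  cin :: nat
  cgates :: "gate list"
  couts :: "nat list"

fun gate_args :: "gate \<Rightarrow> nat list" where
  "gate_args (GConst b) = []"
| "gate_args (GNot i) = [i]"
| "gate_args (GAnd i j) = [i, j]"
| "gate_args (GOr i j) = [i, j]"

fun gate_val :: "bool list \<Rightarrow> gate \<Rightarrow> bool" where
  "gate_val vs (GConst b) = b"
| "gate_val vs (GNot i) = (\<not> vs ! i)"
| "gate_val vs (GAnd i j) = (vs ! i \<and> vs ! j)"
| "gate_val vs (GOr i j) = (vs ! i \<or> vs ! j)"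

fun map_gate :: "(nat \<Rightarrow> nat) \<Rightarrow> gate \<Rightarrow> gate" where
  "map_gate f (GConst b) = GConst b"
| "map_gate f (GNot i) = GNot (f i)"
| "map_gate f (GAnd i j) = GAnd (f i) (f j)"
| "map_gate f (GOr i j) = GOr (f i) (f j)"

definition circ_wf :: "circuit \<Rightarrow> bool" where
  "circ_wf C \<longleftrightarrow>
     (\<forall>j < length (cgates C). \<forall>i \<in> set (gate_args (cgates C ! j)). i < cin C + j) \<and>
     (\<forall>w \<in> set (couts C). w < cin C + length (cgates C))"

definition wires :: "circuit \<Rightarrow> bool list \<Rightarrow> bool list" where
  "wires C x = fold (\<lambda>g vs. vs @ [gate_val vs g]) (cgates C) x"

definition ceval :: "circuit \<Rightarrow> bool list \<Rightarrow> bool list" where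
  "ceval C x = map (\<lambda>w. wires C x ! w) (couts C)"

definition csize :: "circuit \<Rightarrow> nat" where
  "csize C = cin C + length (cgates C) + length (couts C)"

definition computes :: "circuit \<Rightarrow> nat \<Rightarrow> nat \<Rightarrow> (bool list \<Rightarrow> bool list) \<Rightarrow> bool" where
  "computes C a b f \<longleftrightarrow> circ_wf C \<and> cin C = a \<and> length (couts C) = b \<and>
     (\<forall>x. length x = a \<longrightarrow> ceval C x = f x)"

definition crange :: "circuit \<Rightarrow> bool list set" where
  "crange C = {ceval C x | x. length x = cin C}"

definition poly_bounded :: "(nat \<Rightarrow> nat) \<Rightarrow> bool" where
  "poly_bounded f \<longleftrightarrow> (\<exists>c. \<forall>n. f n \<le> c * n ^ c + c)"

definition nd_accepts :: "circuit \<Rightarrow> nat \<Rightarrow> bool list \<Rightarrow> bool" where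
  "nd_accepts D w y \<longleftrightarrow> (\<exists>u. length u = w \<and> ceval D (y @ u) = [True])"

definition demi_bits :: "(nat \<Rightarrow> nat) \<Rightarrow> (nat \<Rightarrow> bool list \<Rightarrow> bool list) \<Rightarrow> bool" where
  "demi_bits N G \<longleftrightarrow>
     (\<forall>n. N n > n) \<and>
     (\<exists>Gc. poly_bounded (\<lambda>n. csize (Gc n)) \<and> (\<forall>n. computes (Gc n) n (N n) (G n))) \<and>
     (\<forall>(D :: nat \<Rightarrow> circuit) (W :: nat \<Rightarrow> nat).
        (\<forall>n. circ_wf (D n) \<and> cin (D n) = N n + W n \<and> length (couts (D n)) = 1) \<and>
        poly_bounded (\<lambda>n. csize (D n)) \<longrightarrow>
        (\<forall>\<^sub>F n in sequentially.
           \<not> (real (card {y. length y = N n \<and> nd_accepts (D n) (W n) y}) \<ge> (1/3) * 2 ^ N n \<and>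
              (\<forall>x. length x = n \<longrightarrow> \<not> nd_accepts (D n) (W n) (G n x)))))"

definition pairwise_indep ::
    "nat \<Rightarrow> nat \<Rightarrow> nat \<Rightarrow> (bool list \<Rightarrow> bool list \<Rightarrow> bool list) \<Rightarrow> bool" where
  "pairwise_indep k N m h \<longleftrightarrow>
     (\<forall>y y' z z'. length y = N \<and> length y' = N \<and> y \<noteq> y' \<and> length z = m \<and> length z' = m \<longrightarrow>
        real (card {key. length key = k \<and> h key y = z \<and> h key y' = z'}) / 2 ^ k = 1 / 2 ^ (2 * m))"

text \<open>The circuit h_key \<circ> G: the hash circuit Hc (inputs key @ y) with the key hardwired as
  constants and y fed by the outputs of Gc.\<close>
definition plug :: "circuit \<Rightarrow> circuit \<Rightarrow> bool list \<Rightarrow> circuit" where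
  "plug Gc Hc key =
    (let n = cin Gc; g = length (cgates Gc); k = length key; N = length (couts Gc);
         r = (\<lambda>w. if w < k then n + g + w
                   else if w < k + N then couts Gc ! (w - k)
                   else n + g + k + (w - k - N))
     in \<lparr> cin = n,
          cgates = cgates Gc @ map GConst key @ map (map_gate r) (cgates Hc),
          couts = map r (couts Hc) \<rparr>)"

definition enc_nat :: "nat \<Rightarrow> bool list" where
  "enc_nat k = replicate k True @ [False]"

fun enc_gate :: "gate \<Rightarrow> bool list" where
  "enc_gate (GConst b) = enc_nat 0 @ [b]"
| "enc_gate (GNot i) = enc_nat 1 @ enc_nat i"
| "enc_gate (GAnd i j) = enc_nat 2 @ enc_nat i @ enc_nat j"
| "enc_gate (GOr i j) = enc_nat 3 @ enc_nat i @ enc_nat j"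

definition enc_circuit :: "circuit \<Rightarrow> bool list" where
  "enc_circuit C = enc_nat (cin C) @ enc_nat (length (cgates C)) @ concat (map enc_gate (cgates C))
     @ enc_nat (length (couts C)) @ concat (map enc_nat (couts C))"

text \<open>Tape symbols: 0 = blank, 1 = bit 0, 2 = bit 1, others auxiliary.
  Transitions (q, read, q', write, move). The machine halts and accepts in state qacc;
  a configuration without applicable transition halts (rejects).\<close>

datatype move = MLeft | MRight | MStay

record ntm =
  q0 :: nat
  qacc :: nat
  delta :: "(nat \<times> nat \<times> nat \<times> nat \<times> move) set"

type_synonym config = "nat \<times> nat \<times> (nat \<Rightarrow> nat)"

definition sym :: "bool \<Rightarrow> nat" where
  "sym b = (if b then 2 else 1)"

fun mv :: "move \<Rightarrow> nat \<Rightarrow> nat" where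
  "mv MLeft h = h - 1"
| "mv MRight h = h + 1"
| "mv MStay h = h"

definition ntm_init :: "ntm \<Rightarrow> bool list \<Rightarrow> config" where
  "ntm_init M x = (q0 M, 0, \<lambda>i. if i < length x then sym (x ! i) else 0)"

definition ntm_step :: "ntm \<Rightarrow> config \<Rightarrow> config \<Rightarrow> bool" where
  "ntm_step M c c' \<longleftrightarrow>
     (case c of (q, h, t) \<Rightarrow> q \<noteq> qacc M \<and>
        (\<exists>q' s d. (q, t h, q', s, d) \<in> delta M \<and> c' = (q', mv d h, t(h := s))))"

definition ntm :: "ntm \<Rightarrow> bool" where
  "ntm M \<longleftrightarrow> finite (delta M)"

definition ntm_poly_time :: "ntm \<Rightarrow> bool" where
  "ntm_poly_time M \<longleftrightarrow> (\<exists>c. \<forall>x t cf. (ntm_step M ^^ t) (ntm_init M x) cf \<longrightarrow>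
      t \<le> c * length x ^ c + c)"

text \<open>The output of a tape: the maximal bit string written from cell 0 on.\<close>
definition tape_output :: "(nat \<Rightarrow> nat) \<Rightarrow> bool list \<Rightarrow> bool" where
  "tape_output tp y \<longleftrightarrow> (\<forall>i < length y. tp i = sym (y ! i)) \<and> tp (length y) \<notin> {1, 2}"

definition ntm_accepts_with :: "ntm \<Rightarrow> bool list \<Rightarrow> bool list \<Rightarrow> bool" where
  "ntm_accepts_with M x y \<longleftrightarrow>
     (\<exists>t h tp. (ntm_step M ^^ t) (ntm_init M x) (qacc M, h, tp) \<and> tape_output tp y)"

definition solves_avoid :: "ntm \<Rightarrow> circuit \<Rightarrow> bool" where
  "solves_avoid M C \<longleftrightarrow>
     (\<exists>y. ntm_accepts_with M (enc_circuit C) y) \<and>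
     (\<forall>y. ntm_accepts_with M (enc_circuit C) y \<longrightarrow>
        length y = length (couts C) \<and> y \<notin> crange C)"

end

theory Submission
  imports Defs
begin

definition W :: "gate list \<Rightarrow> bool list \<Rightarrow> bool list" where
  "W gs x = fold (\<lambda>g vs. vs @ [gate_val vs g]) gs x"

lemma W_Nil[simp]: "W [] x = x" by (simp add: W_def)
lemma W_append: "W (gs1 @ gs2) x = W gs2 (W gs1 x)" by (simp add: W_def)
lemma W_Cons: "W (g # gs) x = W gs (x @ [gate_val x g])" by (simp add: W_def)
lemma W_snoc: "W (gs @ [g]) x = W gs x @ [gate_val (W gs x) g]" by (simp add: W_def)
lemma wires_W: "wires C x = W (cgates C) x" by (simp add: W_def wires_def)

lemma W_ext: "\<exists>r. W gs x = x @ r \<and> length r = length gs"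
proof (induction gs rule: rev_induct)
  case Nil then show ?case by simp
next
  case (snoc g gs) then show ?case by (auto simp: W_snoc)
qed

lemma length_W[simp]: "length (W gs x) = length x + length gs"
  using W_ext[of gs x] by auto

lemma W_nth_pre: "i < length x \<Longrightarrow> W gs x ! i = x ! i"
  using W_ext[of gs x] by (auto simp: nth_append)

definition wfg :: "nat \<Rightarrow> gate list \<Rightarrow> bool" where
  "wfg b gs \<longleftrightarrow> (\<forall>j < length gs. \<forall>i \<in> set (gate_args (gs ! j)). i < b + j)"

lemma wfg_append: "wfg b (gs1 @ gs2) \<longleftrightarrow> wfg b gs1 \<and> wfg (b + length gs1) gs2"
proof
  assume a: "wfg b (gs1 @ gs2)"
  have "wfg b gs1" unfolding wfg_def
  proof (intro allI impI ballI)
    fix j i assume j: "j < length gs1" and i: "i \<in> set (gate_args (gs1 ! j))"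
    then show "i < b + j" using a unfolding wfg_def by (auto simp: nth_append)
  qed
  moreover have "wfg (b + length gs1) gs2" unfolding wfg_def
  proof (intro allI impI ballI)
    fix j i assume j: "j < length gs2" and i: "i \<in> set (gate_args (gs2 ! j))"
    have "(gs1 @ gs2) ! (length gs1 + j) = gs2 ! j" by simp
    then show "i < b + length gs1 + j" using a j i unfolding wfg_def
      by (metis add.assoc length_append nat_add_left_cancel_less)
  qed
  ultimately show "wfg b gs1 \<and> wfg (b + length gs1) gs2" ..
next
  assume a: "wfg b gs1 \<and> wfg (b + length gs1) gs2"
  show "wfg b (gs1 @ gs2)" unfolding wfg_def
  proof (intro allI impI ballI)
    fix j i assume j: "j < length (gs1 @ gs2)" and i: "i \<in> set (gate_args ((gs1 @ gs2) ! j))"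
    show "i < b + j"
    proof (cases "j < length gs1")
      case True
      then show ?thesis using a i unfolding wfg_def by (auto simp: nth_append)
    next
      case False
      define j' where "j' = j - length gs1"
      have jj: "j = length gs1 + j'" using False by (simp add: j'_def)
      have "j' < length gs2" using j jj by simp
      moreover have "i \<in> set (gate_args (gs2 ! j'))" using i jj by (simp add: nth_append)
      ultimately have "i < b + length gs1 + j'" using a unfolding wfg_def by blast
      then show ?thesis using jj by simp
    qed
  qed
qed

lemma wfg_Nil[simp]: "wfg b []" by (simp add: wfg_def)

lemma wfg_single[simp]: "wfg b [g] \<longleftrightarrow> (\<forall>i \<in> set (gate_args g). i < b)"
  by (simp add: wfg_def)

lemma wfg_mono: "wfg b gs \<Longrightarrow> b \<le> b' \<Longrightarrow> wfg b' gs"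
  unfolding wfg_def by fastforce

lemma circ_wf_wfg: "circ_wf C \<longleftrightarrow> wfg (cin C) (cgates C) \<and> (\<forall>w \<in> set (couts C). w < cin C + length (cgates C))"
  by (simp add: circ_wf_def wfg_def)

lemma gate_val_map:
  assumes "\<forall>i \<in> set (gate_args g). vs ! r i = us ! i"
  shows "gate_val vs (map_gate r g) = gate_val us g"
  using assms by (cases g) auto

lemma gate_args_map: "set (gate_args (map_gate r g)) = r ` set (gate_args g)"
  by (cases g) auto

definition remap :: "nat list \<Rightarrow> nat \<Rightarrow> nat \<Rightarrow> nat" where
  "remap inm b w = (if w < length inm then inm ! w else b + (w - length inm))"

lemma W_embed:
  assumes "wfg (length inm) gs"
    and "\<forall>i \<in> set inm. i < length vs"
  shows "\<forall>w < length inm + length gs.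
     W (map (map_gate (remap inm (length vs))) gs) vs ! remap inm (length vs) w
       = W gs (map ((!) vs) inm) ! w"
  using assms(1)
proof (induction gs rule: rev_induct)
  case Nil
  then show ?case using assms(2) by (auto simp: remap_def W_nth_pre)
next
  case (snoc g gs)
  let ?r = "remap inm (length vs)"
  let ?V = "W (map (map_gate ?r) gs) vs"
  let ?U = "W gs (map ((!) vs) inm)"
  have wgs: "wfg (length inm) gs" and wg: "\<forall>i \<in> set (gate_args g). i < length inm + length gs"
    using snoc.prems by (auto simp: wfg_append)
  have IH: "\<forall>w < length inm + length gs. ?V ! ?r w = ?U ! w" using snoc.IH wgs by blast
  have rlt: "?r w < length ?V" if "w < length inm + length gs" for w
    using that assms(2) by (auto simp: remap_def intro: less_le_trans[OF _ le_add1])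
  show ?case
  proof (intro allI impI)
    fix w assume w: "w < length inm + length (gs @ [g])"
    show "W (map (map_gate ?r) (gs @ [g])) vs ! ?r w = W (gs @ [g]) (map ((!) vs) inm) ! w"
    proof (cases "w < length inm + length gs")
      case True
      then show ?thesis using IH rlt[OF True]
        by (simp add: W_snoc nth_append)
    next
      case False
      then have w': "w = length inm + length gs" using w by simp
      have rw: "?r w = length ?V" using w' by (simp add: remap_def)
      have "gate_val ?V (map_gate ?r g) = gate_val ?U g"
        by (rule gate_val_map) (use IH wg in auto)
      then show ?thesis using w' rw by (simp add: W_snoc nth_append)
    qed
  qed
qed

lemma W_consts: "W (map GConst key) vs = vs @ key"
  by (induction key arbitrary: vs) (auto simp: W_Cons)

lemma wfg_embed:
  assumes "wfg (length inm) gs" "\<forall>i \<in> set inm. i < b"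
  shows "wfg b (map (map_gate (remap inm b)) gs)"
  unfolding wfg_def
proof (intro allI impI ballI)
  fix j i assume j: "j < length (map (map_gate (remap inm b)) gs)"
    and i: "i \<in> set (gate_args (map (map_gate (remap inm b)) gs ! j))"
  then obtain i0 where i0: "i0 \<in> set (gate_args (gs ! j))" and ii: "i = remap inm b i0"
    by (auto simp: gate_args_map)
  have "i0 < length inm + j" using assms(1) j i0 unfolding wfg_def by auto
  then show "i < b + j"
    using assms(2) ii by (cases "i0 < length inm") (auto simp: remap_def intro: less_le_trans[OF _ le_add1])
qed


lemma plugeq: "plug Gc Hc key = \<lparr> cin = cin Gc,
          cgates = cgates Gc @ map GConst key @ map (map_gate (remap (map (\<lambda>i. cin Gc + length (cgates Gc) + i) [0..<length key] @ couts Gc) (cin Gc + length (cgates Gc) + length key))) (cgates Hc),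
          couts = map (remap (map (\<lambda>i. cin Gc + length (cgates Gc) + i) [0..<length key] @ couts Gc) (cin Gc + length (cgates Gc) + length key)) (couts Hc) \<rparr>"
proof -
  have r: "(\<lambda>w. if w < length key then cin Gc + length (cgates Gc) + w
                   else if w < length key + length (couts Gc) then couts Gc ! (w - length key)
                   else cin Gc + length (cgates Gc) + length key + (w - length key - length (couts Gc))) = remap (map (\<lambda>i. cin Gc + length (cgates Gc) + i) [0..<length key] @ couts Gc) (cin Gc + length (cgates Gc) + length key)"
    by (auto simp: remap_def nth_append fun_eq_iff)
  show ?thesis unfolding plug_def Let_def r by simp

qed

lemma plug_correct:
  assumes wG: "circ_wf Gc" and wH: "circ_wf Hc"
    and cH: "cin Hc = length key + length (couts Gc)"
    and lx: "length x = cin Gc"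
  shows "ceval (plug Gc Hc key) x = ceval Hc (key @ ceval Gc x)"
    and "cin (plug Gc Hc key) = cin Gc"
    and "length (couts (plug Gc Hc key)) = length (couts Hc)"
    and "circ_wf (plug Gc Hc key)"
proof -
  define n where "n = cin Gc"
  define g where "g = length (cgates Gc)"
  define k where "k = length key"
  define inm where "inm = map (\<lambda>i. n + g + i) [0..<k] @ couts Gc"
  define vs where "vs = W (map GConst key) (W (cgates Gc) x)"
  have lvs: "length vs = n + g + k" by (simp add: vs_def n_def g_def k_def lx)
  have plugeq: "plug Gc Hc key = \<lparr> cin = n,
          cgates = cgates Gc @ map GConst key @ map (map_gate (remap inm (n+g+k))) (cgates Hc),
          couts = map (remap inm (n+g+k)) (couts Hc) \<rparr>"
    unfolding plugeq n_def g_def k_def inm_def by simp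
  have coG: "\<forall>w \<in> set (couts Gc). w < n + g" using wG by (simp add: circ_wf_def n_def g_def)
  have inmlt: "\<forall>i \<in> set inm. i < length vs" using coG by (auto simp: inm_def lvs)
  have linm: "length inm = cin Hc" by (simp add: inm_def cH k_def)
  have wHg: "wfg (length inm) (cgates Hc)" using wH linm by (simp add: circ_wf_wfg)
  have mapvs: "map ((!) vs) inm = key @ ceval Gc x"
  proof -
    have a: "vs = W (cgates Gc) x @ key" by (simp add: vs_def W_consts)
    have "map ((!) vs) (map (\<lambda>i. n + g + i) [0..<k]) = key"
      by (rule nth_equalityI) (auto simp: a nth_append lx n_def g_def k_def)
    moreover have "map ((!) vs) (couts Gc) = ceval Gc x"
      using coG by (auto simp: a nth_append lx n_def g_def ceval_def wires_W)
    ultimately show ?thesis by (simp add: inm_def)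
  qed
  have E: "\<forall>w < length inm + length (cgates Hc).
     W (map (map_gate (remap inm (length vs))) (cgates Hc)) vs ! remap inm (length vs) w
       = W (cgates Hc) (map ((!) vs) inm) ! w"
    by (rule W_embed[OF wHg inmlt])
  have coH: "\<forall>w \<in> set (couts Hc). w < length inm + length (cgates Hc)"
    using wH linm by (simp add: circ_wf_def)
  have e1: "ceval (plug Gc Hc key) x = map (\<lambda>w. W (map (map_gate (remap inm (length vs))) (cgates Hc)) vs ! remap inm (length vs) w) (couts Hc)"
    unfolding plugeq lvs by (simp add: ceval_def wires_W W_append vs_def)
  also have "\<dots> = map (\<lambda>w. W (cgates Hc) (key @ ceval Gc x) ! w) (couts Hc)"
    using E coH by (auto simp: mapvs)
  finally show "ceval (plug Gc Hc key) x = ceval Hc (key @ ceval Gc x)"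
    by (simp only: ceval_def[of Hc] wires_W)
  show "cin (plug Gc Hc key) = cin Gc" by (simp add: plugeq n_def)
  show "length (couts (plug Gc Hc key)) = length (couts Hc)" by (simp add: plugeq)
  show "circ_wf (plug Gc Hc key)"
  proof -
    have "wfg n (cgates Gc)" using wG by (simp add: circ_wf_wfg n_def)
    moreover have "wfg (n + g) (map GConst key)" by (simp add: wfg_def)
    moreover have "wfg (n + g + k) (map (map_gate (remap inm (n+g+k))) (cgates Hc))"
      by (rule wfg_embed[OF wHg]) (use inmlt lvs in auto)
    ultimately have "wfg n (cgates Gc @ map GConst key @ map (map_gate (remap inm (n+g+k))) (cgates Hc))"
      by (simp add: wfg_append g_def k_def add.assoc)
    moreover have "\<forall>w \<in> set (couts Hc). remap inm (n+g+k) w < n + (g + (k + length (cgates Hc)))"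
      using coH inmlt lvs by (auto simp: remap_def) (metis add.assoc nth_mem trans_less_add1)
    ultimately show ?thesis unfolding plugeq circ_wf_wfg by (simp add: g_def k_def)
  qed
qed


datatype fm = FV nat | FC bool | FN fm | FA fm fm | FO fm fm

fun feval :: "bool list \<Rightarrow> fm \<Rightarrow> bool" where
  "feval vs (FV i) = vs ! i"
| "feval vs (FC b) = b"
| "feval vs (FN f) = (\<not> feval vs f)"
| "feval vs (FA f g) = (feval vs f \<and> feval vs g)"
| "feval vs (FO f g) = (feval vs f \<or> feval vs g)"

fun fok :: "nat \<Rightarrow> fm \<Rightarrow> bool" where
  "fok b (FV i) = (i < b)"
| "fok b (FC c) = True"
| "fok b (FN f) = fok b f"
| "fok b (FA f g) = (fok b f \<and> fok b g)"
| "fok b (FO f g) = (fok b f \<and> fok b g)"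

fun fsize :: "fm \<Rightarrow> nat" where
  "fsize (FV i) = 1"
| "fsize (FC c) = 1"
| "fsize (FN f) = Suc (fsize f)"
| "fsize (FA f g) = fsize f + fsize g + 1"
| "fsize (FO f g) = fsize f + fsize g + 1"

fun comp :: "nat \<Rightarrow> fm \<Rightarrow> gate list" where
  "comp b (FV i) = [GAnd i i]"
| "comp b (FC c) = [GConst c]"
| "comp b (FN f) = comp b f @ [GNot (b + fsize f - 1)]"
| "comp b (FA f g) = comp b f @ comp (b + fsize f) g @ [GAnd (b + fsize f - 1) (b + fsize f + fsize g - 1)]"
| "comp b (FO f g) = comp b f @ comp (b + fsize f) g @ [GOr (b + fsize f - 1) (b + fsize f + fsize g - 1)]"

lemma fsize_pos[simp]: "0 < fsize f"
  by (induction f) auto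

lemma length_comp[simp]: "length (comp b f) = fsize f"
  by (induction f arbitrary: b) auto

lemma fok_mono: "fok b f \<Longrightarrow> b \<le> b' \<Longrightarrow> fok b' f"
  by (induction f) auto

lemma feval_ext: "fok b f \<Longrightarrow> (\<forall>i<b. vs ! i = us ! i) \<Longrightarrow> feval vs f = feval us f"
  by (induction f) auto

lemma W_nth_pre': "i < length x \<Longrightarrow> \<forall>i<length x. W gs x ! i = x ! i"
  using W_nth_pre by blast

lemma wfg_comp: "fok b f \<Longrightarrow> wfg b (comp b f)"
proof (induction f arbitrary: b)
  case (FN f)
  have "0 < fsize f" by simp
  then show ?case using FN by (simp add: wfg_append)
next
  case (FA f g)
  have a: "wfg b (comp b f)" using FA by simp
  have c: "wfg (b + fsize f) (comp (b + fsize f) g)" using FA.IH(2) FA.prems fok_mono[of b g "b + fsize f"] by simp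
  show ?case using a c apply (simp add: wfg_append) using fsize_pos[of f] fsize_pos[of g] by linarith
next
  case (FO f g)
  have a: "wfg b (comp b f)" using FO by simp
  have c: "wfg (b + fsize f) (comp (b + fsize f) g)" using FO.IH(2) FO.prems fok_mono[of b g "b + fsize f"] by simp
  show ?case using a c apply (simp add: wfg_append) using fsize_pos[of f] fsize_pos[of g] by linarith
qed (auto)

lemma comp_val: "fok (length vs) f \<Longrightarrow> W (comp (length vs) f) vs ! (length vs + fsize f - 1) = feval vs f"
proof (induction f arbitrary: vs)
  case (FV i)
  then show ?case by (simp add: W_Cons nth_append)
next
  case (FC c)
  then show ?case by (simp add: W_Cons nth_append)
next
  case (FN f)
  let ?b = "length vs"
  have IH: "W (comp ?b f) vs ! (?b + fsize f - 1) = feval vs f" using FN by simp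
  have l: "?b + fsize f - 1 < length (W (comp ?b f) vs)" by simp
  show ?case using IH l by (simp add: W_append W_Cons nth_append)
next
  case (FA f g)
  let ?b = "length vs"
  define v1 where "v1 = W (comp ?b f) vs"
  have l1: "length v1 = ?b + fsize f" by (simp add: v1_def)
  have IH1: "v1 ! (?b + fsize f - 1) = feval vs f" using FA by (simp add: v1_def)
  have fg: "fok (length v1) g" using FA l1 fok_mono by force
  have IH2: "W (comp (length v1) g) v1 ! (length v1 + fsize g - 1) = feval v1 g" using FA.IH(2)[OF fg] .
  have e2: "feval v1 g = feval vs g"
    using feval_ext[of ?b g v1 vs] FA by (simp add: v1_def W_nth_pre)
  have p: "W (comp (length v1) g) v1 ! (?b + fsize f - 1) = v1 ! (?b + fsize f - 1)"
    by (rule W_nth_pre) (simp add: l1)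
  show ?case
    using IH1 IH2 e2 p l1
    by (simp add: W_append W_Cons nth_append v1_def[symmetric] add.assoc)
next
  case (FO f g)
  let ?b = "length vs"
  define v1 where "v1 = W (comp ?b f) vs"
  have l1: "length v1 = ?b + fsize f" by (simp add: v1_def)
  have IH1: "v1 ! (?b + fsize f - 1) = feval vs f" using FO by (simp add: v1_def)
  have fg: "fok (length v1) g" using FO l1 fok_mono by force
  have IH2: "W (comp (length v1) g) v1 ! (length v1 + fsize g - 1) = feval v1 g" using FO.IH(2)[OF fg] .
  have e2: "feval v1 g = feval vs g"
    using feval_ext[of ?b g v1 vs] FO by (simp add: v1_def W_nth_pre)
  have p: "W (comp (length v1) g) v1 ! (?b + fsize f - 1) = v1 ! (?b + fsize f - 1)"
    by (rule W_nth_pre) (simp add: l1)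
  show ?case
    using IH1 IH2 e2 p l1
    by (simp add: W_append W_Cons nth_append v1_def[symmetric] add.assoc)
qed

fun complist :: "nat \<Rightarrow> fm list \<Rightarrow> gate list" where
  "complist b [] = []"
| "complist b (f # fs) = comp b f @ complist (b + fsize f) fs"

fun outs :: "nat \<Rightarrow> fm list \<Rightarrow> nat list" where
  "outs b [] = []"
| "outs b (f # fs) = (b + fsize f - 1) # outs (b + fsize f) fs"

definition layer :: "nat \<Rightarrow> fm list \<Rightarrow> gate list" where
  "layer b fs = complist b fs @ map (\<lambda>w. GAnd w w) (outs b fs)"

lemma length_complist: "length (complist b fs) = sum_list (map fsize fs)"
  by (induction fs arbitrary: b) auto

lemma length_outs[simp]: "length (outs b fs) = length fs"
  by (induction fs arbitrary: b) auto

lemma length_layer: "length (layer b fs) = sum_list (map fsize fs) + length fs"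
  by (simp add: layer_def length_complist)

lemma outs_lt: "\<forall>w \<in> set (outs b fs). w < b + sum_list (map fsize fs)"
proof (induction fs arbitrary: b)
  case Nil then show ?case by simp
next
  case (Cons f fs)
  show ?case using Cons.IH[of "b + fsize f"] apply (auto simp: add.assoc) using fsize_pos[of f] by linarith
qed

lemma complist_val:
  assumes "\<forall>f \<in> set fs. fok b0 f" "b0 \<le> length vs"
  shows "\<forall>k < length fs. W (complist (length vs) fs) vs ! (outs (length vs) fs ! k) = feval vs (fs ! k)"
  using assms
proof (induction fs arbitrary: vs)
  case Nil then show ?case by simp
next
  case (Cons f fs)
  let ?b = "length vs"
  define v1 where "v1 = W (comp ?b f) vs"
  have l1: "length v1 = ?b + fsize f" by (simp add: v1_def)
  have pre: "\<forall>i<?b. v1 ! i = vs ! i" by (simp add: v1_def W_nth_pre)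
  have IH: "\<forall>k < length fs. W (complist (length v1) fs) v1 ! (outs (length v1) fs ! k) = feval v1 (fs ! k)"
    using Cons.IH[of v1] Cons.prems l1 by auto
  show ?case
  proof (intro allI impI)
    fix k assume k: "k < length (f # fs)"
    show "W (complist ?b (f # fs)) vs ! (outs ?b (f # fs) ! k) = feval vs ((f # fs) ! k)"
    proof (cases k)
      case 0
      have "fok ?b f" using Cons.prems fok_mono by auto
      then have "v1 ! (?b + fsize f - 1) = feval vs f" using comp_val by (simp add: v1_def)
      moreover have "W (complist (length v1) fs) v1 ! (?b + fsize f - 1) = v1 ! (?b + fsize f - 1)"
        by (rule W_nth_pre) (simp add: l1)
      ultimately show ?thesis using 0 l1 by (simp add: W_append v1_def[symmetric])
    next
      case (Suc k')
      then have k': "k' < length fs" using k by simp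
      have "feval v1 (fs ! k') = feval vs (fs ! k')"
        using feval_ext[of b0 "fs ! k'" v1 vs] Cons.prems pre k' by auto
      then show ?thesis using IH k' Suc l1 by (simp add: W_append v1_def[symmetric])
    qed
  qed
qed

lemma W_copies: "\<forall>w \<in> set os. w < length us \<Longrightarrow> W (map (\<lambda>w. GAnd w w) os) us = us @ map ((!) us) os"
proof (induction os arbitrary: us)
  case Nil then show ?case by simp
next
  case (Cons a os)
  have "\<forall>w\<in>set os. w < length (us @ [us ! a])" using Cons.prems by auto
  then have "W (map (\<lambda>w. GAnd w w) os) (us @ [us ! a]) = (us @ [us ! a]) @ map ((!) (us @ [us ! a])) os"
    by (rule Cons.IH)
  moreover have "map ((!) (us @ [us ! a])) os = map ((!) us) os"
    using Cons.prems by (auto simp: nth_append)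
  ultimately show ?case by (simp add: W_Cons)
qed

lemma layer_val:
  assumes "\<forall>f \<in> set fs. fok (length vs) f"
  shows "\<exists>R. W (layer (length vs) fs) vs = vs @ R @ map (feval vs) fs"
proof -
  let ?b = "length vs"
  define us where "us = W (complist ?b fs) vs"
  obtain R where R: "us = vs @ R" using W_ext[of "complist ?b fs" vs] us_def by auto
  have lus: "length us = ?b + sum_list (map fsize fs)" by (simp add: us_def length_complist)
  have olt: "\<forall>w \<in> set (outs ?b fs). w < length us" using outs_lt[of ?b fs] lus by simp
  have vals: "map ((!) us) (outs ?b fs) = map (feval vs) fs"
    using complist_val[of fs ?b vs] assms by (auto intro!: nth_equalityI simp: us_def)
  have "W (layer ?b fs) vs = us @ map ((!) us) (outs ?b fs)"
    by (simp add: layer_def W_append us_def[symmetric] W_copies[OF olt])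
  then show ?thesis using R vals by simp
qed

lemma wfg_complist: "\<forall>f \<in> set fs. fok b f \<Longrightarrow> wfg b (complist b fs)"
proof (induction fs arbitrary: b)
  case Nil then show ?case by simp
next
  case (Cons f fs)
  have "wfg (b + fsize f) (complist (b + fsize f) fs)"
    using Cons fok_mono[of b _ "b + fsize f"] by auto
  then show ?case using Cons wfg_comp by (simp add: wfg_append)
qed

lemma wfg_layer: "\<forall>f \<in> set fs. fok b f \<Longrightarrow> wfg b (layer b fs)"
proof -
  assume a: "\<forall>f \<in> set fs. fok b f"
  have "wfg (b + length (complist b fs)) (map (\<lambda>w. GAnd w w) (outs b fs))"
    using outs_lt[of b fs] unfolding wfg_def by (auto simp: length_complist intro: less_le_trans[OF _ le_add1])
  then show ?thesis using wfg_complist[OF a] by (simp add: layer_def wfg_append)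
qed


definition tq :: "nat \<times> nat \<times> nat \<times> nat \<times> move \<Rightarrow> nat" where "tq t = fst t"
definition ta :: "nat \<times> nat \<times> nat \<times> nat \<times> move \<Rightarrow> nat" where "ta t = fst (snd t)"
definition tq' :: "nat \<times> nat \<times> nat \<times> nat \<times> move \<Rightarrow> nat" where "tq' t = fst (snd (snd t))"
definition tw :: "nat \<times> nat \<times> nat \<times> nat \<times> move \<Rightarrow> nat" where "tw t = fst (snd (snd (snd t)))"
definition td :: "nat \<times> nat \<times> nat \<times> nat \<times> move \<Rightarrow> move" where "td t = snd (snd (snd (snd t)))"

definition cst :: "config \<Rightarrow> nat" where "cst c = fst c"
definition chd :: "config \<Rightarrow> nat" where "chd c = fst (snd c)"
definition ctp :: "config \<Rightarrow> nat \<Rightarrow> nat" where "ctp c = snd (snd c)"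

definition firstj :: "bool list \<Rightarrow> nat \<Rightarrow> bool" where
  "firstj cs j \<longleftrightarrow> j < length cs \<and> cs ! j \<and> (\<forall>j'<j. \<not> cs ! j')"

definition fOr :: "fm list \<Rightarrow> fm" where "fOr fs = foldr FO fs (FC False)"
definition fAnd :: "fm list \<Rightarrow> fm" where "fAnd fs = foldr FA fs (FC True)"

lemma feval_fOr: "feval vs (fOr fs) = (\<exists>f\<in>set fs. feval vs f)"
  by (induction fs) (auto simp: fOr_def)
lemma feval_fAnd: "feval vs (fAnd fs) = (\<forall>f\<in>set fs. feval vs f)"
  by (induction fs) (auto simp: fAnd_def)
lemma ev_or_idx[simp]: "feval vs (fOr (map g [0..<n])) = (\<exists>k<n. feval vs (g k))"
  by (auto simp: feval_fOr)
lemma ev_and_idx[simp]: "feval vs (fAnd (map g [0..<n])) = (\<forall>k<n. feval vs (g k))"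
  by (auto simp: feval_fAnd)
lemma ev_if_false[simp]: "feval vs (if b then f else FC False) = (b \<and> feval vs f)"
  by simp
lemma fok_fOr[simp]: "fok b (fOr fs) = (\<forall>f\<in>set fs. fok b f)"
  by (induction fs) (auto simp: fOr_def)
lemma fok_fAnd[simp]: "fok b (fAnd fs) = (\<forall>f\<in>set fs. fok b f)"
  by (induction fs) (auto simp: fAnd_def)
lemma fsize_fOr: "fsize (fOr fs) = sum_list (map fsize fs) + length fs + 1"
  by (induction fs) (auto simp: fOr_def)
lemma fsize_fAnd: "fsize (fAnd fs) = sum_list (map fsize fs) + length fs + 1"
  by (induction fs) (auto simp: fAnd_def)

locale sim =
  fixes M :: ntm and ds :: "(nat \<times> nat \<times> nat \<times> nat \<times> move) list"
    and qs ss :: "nat list" and P :: nat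
  assumes ds_delta: "set ds = delta M"
    and q0_qs: "q0 M \<in> set qs" and qacc_qs: "qacc M \<in> set qs"
    and ds_qs: "\<forall>t\<in>set ds. tq' t \<in> set qs"
    and ss0: "0 \<in> set ss" and ss1: "1 \<in> set ss" and ss2: "2 \<in> set ss"
    and ds_ss: "\<forall>t\<in>set ds. tw t \<in> set ss"
begin

abbreviation "nd \<equiv> length ds"
abbreviation "nq \<equiv> length qs"
abbreviation "ns \<equiv> length ss"

definition app :: "config \<Rightarrow> nat \<times> nat \<times> nat \<times> nat \<times> move \<Rightarrow> bool" where
  "app c t \<longleftrightarrow> cst c = tq t \<and> ctp c (chd c) = ta t \<and> cst c \<noteq> qacc M"

definition tapply :: "nat \<times> nat \<times> nat \<times> nat \<times> move \<Rightarrow> config \<Rightarrow> config" where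
  "tapply t c = (tq' t, mv (td t) (chd c), (ctp c)(chd c := tw t))"

definition taken :: "bool list \<Rightarrow> config \<Rightarrow> nat \<Rightarrow> bool" where
  "taken cs c j \<longleftrightarrow> j < nd \<and> firstj cs j \<and> app c (ds ! j)"

definition sstep :: "bool list \<Rightarrow> config \<Rightarrow> config" where
  "sstep cs c = (if \<exists>j. taken cs c j then tapply (ds ! (THE j. taken cs c j)) c else c)"

lemma taken_unique: "taken cs c j \<Longrightarrow> taken cs c j' \<Longrightarrow> j = j'"
  unfolding taken_def firstj_def by (metis linorder_neqE_nat)

lemma sstep_taken: "taken cs c j \<Longrightarrow> sstep cs c = tapply (ds ! j) c"
  unfolding sstep_def using taken_unique by (metis the_equality)

lemma sstep_none: "\<not> (\<exists>j. taken cs c j) \<Longrightarrow> sstep cs c = c"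
  unfolding sstep_def by (rule if_not_P)

lemma ntm_step_iff: "ntm_step M c c' \<longleftrightarrow> cst c \<noteq> qacc M \<and>
   (\<exists>q' s d. (cst c, ctp c (chd c), q', s, d) \<in> delta M \<and> c' = (q', mv d (chd c), (ctp c)(chd c := s)))"
  by (cases c) (simp add: ntm_step_def cst_def ctp_def chd_def)

lemma sstep_sound: "sstep cs c = c \<or> ntm_step M c (sstep cs c)"
proof (cases "\<exists>j. taken cs c j")
  case True
  then obtain j where j: "taken cs c j" by blast
  define tr where "tr = ds ! j"
  have trm: "tr \<in> delta M" using j ds_delta by (auto simp: taken_def tr_def)
  have tre: "tr = (cst c, ctp c (chd c), tq' tr, tw tr, td tr)"
    using j by (auto simp: taken_def app_def tq_def ta_def tq'_def tw_def td_def prod_eq_iff tr_def)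
  have st: "cst c \<noteq> qacc M" using j by (simp add: taken_def app_def)
  have ss: "sstep cs c = (tq' tr, mv (td tr) (chd c), (ctp c)(chd c := tw tr))"
    using sstep_taken[OF j] by (simp add: tapply_def tr_def)
  have "ntm_step M c (sstep cs c)"
    unfolding ntm_step_iff ss
    using st trm tre by (metis (no_types, lifting))
  then show ?thesis by blast
next
  case False
  then show ?thesis by (simp add: sstep_none)
qed

lemma sstep_complete:
  assumes "ntm_step M c c'"
  shows "\<exists>cs. length cs = nd \<and> sstep cs c = c'"
proof -
  obtain q' s d where st: "cst c \<noteq> qacc M" and mem: "(cst c, ctp c (chd c), q', s, d) \<in> delta M"
    and c': "c' = (q', mv d (chd c), (ctp c)(chd c := s))"
    using assms unfolding ntm_step_iff by blast
  obtain j where j: "j < nd" "ds ! j = (cst c, ctp c (chd c), q', s, d)"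
    using mem ds_delta by (metis in_set_conv_nth)
  define cs where "cs = map (\<lambda>i. i = j) [0..<nd]"
  have "taken cs c j" using j st
    by (auto simp: taken_def firstj_def cs_def app_def tq_def ta_def)
  then have "sstep cs c = tapply (ds ! j) c" by (rule sstep_taken)
  also have "\<dots> = c'" using j c' by (simp add: tapply_def tq'_def td_def tw_def)
  finally have "sstep cs c = c'" .
  moreover have "length cs = nd" by (simp add: cs_def)
  ultimately show ?thesis by blast
qed

lemma sstep_acc: "cst c = qacc M \<Longrightarrow> sstep cs c = c"
  by (rule sstep_none) (auto simp: taken_def app_def)

fun srun :: "(nat \<Rightarrow> bool list) \<Rightarrow> nat \<Rightarrow> config \<Rightarrow> config" where
  "srun ch 0 c = c"
| "srun ch (Suc t) c = sstep (ch t) (srun ch t c)"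

lemma srun_sound: "(ntm_step M)\<^sup>*\<^sup>* c (srun ch t c)"
proof (induction t)
  case 0 then show ?case by simp
next
  case (Suc t)
  then show ?case using sstep_sound[of "ch t" "srun ch t c"]
    by (auto intro: rtranclp.rtrancl_into_rtrancl)
qed

lemma srun_cong: "\<forall>i<t. ch i = ch' i \<Longrightarrow> srun ch t c = srun ch' t c"
  by (induction t) auto

lemma srun_complete:
  "(ntm_step M ^^ t) c c' \<Longrightarrow> \<exists>ch. (\<forall>i. length (ch i) = nd) \<and> srun ch t c = c'"
proof (induction t arbitrary: c')
  case 0 then show ?case by (auto intro: exI[of _ "\<lambda>_. replicate nd False"])
next
  case (Suc t)
  from Suc.prems obtain y where y: "(ntm_step M ^^ t) c y" "ntm_step M y c'"
    by (rule relpowp_Suc_E)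
  obtain ch where ch: "\<forall>i. length (ch i) = nd" "srun ch t c = y" using Suc.IH y(1) by blast
  obtain cs where cs: "length cs = nd" "sstep cs y = c'" using sstep_complete[OF y(2)] by blast
  define ch' where "ch' = ch(t := cs)"
  have "srun ch' t c = srun ch t c" by (rule srun_cong) (simp add: ch'_def)
  then have "srun ch' (Suc t) c = c'" using ch cs by (simp add: ch'_def)
  moreover have "\<forall>i. length (ch' i) = nd" using ch cs by (simp add: ch'_def)
  ultimately show ?case by blast
qed

lemma srun_acc_stay: "cst (srun ch t c) = qacc M \<Longrightarrow> srun ch (t + k) c = srun ch t c"
  by (induction k) (auto simp: sstep_acc)

definition inv :: "nat \<Rightarrow> config \<Rightarrow> bool" where
  "inv t c \<longleftrightarrow> cst c \<in> set qs \<and> chd c \<le> t \<and> (\<forall>i. ctp c i \<in> set ss)"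

lemma inv_sstep: "inv t c \<Longrightarrow> inv (Suc t) (sstep cs c)"
proof (cases "\<exists>j. taken cs c j")
  case True
  assume iv: "inv t c"
  from True obtain j where j: "taken cs c j" by blast
  have jm: "ds ! j \<in> set ds" using j by (simp add: taken_def)
  have "chd (tapply (ds ! j) c) \<le> Suc t"
    using iv by (cases "td (ds ! j)") (auto simp: tapply_def chd_def inv_def)
  then show ?thesis using sstep_taken[OF j] iv ds_qs ds_ss jm
    by (auto simp: inv_def tapply_def cst_def ctp_def chd_def)
next
  case False
  assume "inv t c"
  then show ?thesis using False by (simp add: sstep_none inv_def)
qed

lemma inv_srun: "inv 0 c \<Longrightarrow> inv t (srun ch t c)"
  by (induction t) (auto simp: inv_sstep)

definition hpos :: "nat \<Rightarrow> nat \<Rightarrow> nat" where "hpos p i = p + nq + i"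
definition cpos :: "nat \<Rightarrow> nat \<Rightarrow> nat \<Rightarrow> nat" where "cpos p i s = p + nq + P + i * ns + s"
definition B :: nat where "B = nq + P + P * ns"

lemma idx_lt: "i < P \<Longrightarrow> s < ns \<Longrightarrow> i * ns + s < P * ns"
proof -
  assume "i < P" "s < ns"
  then have "i * ns + s < i * ns + ns" by simp
  also have "\<dots> = Suc i * ns" by simp
  also have "\<dots> \<le> P * ns" using \<open>i < P\<close> by (intro mult_right_mono) auto
  finally show ?thesis .
qed

lemma cpos_lt: "i < P \<Longrightarrow> s < ns \<Longrightarrow> cpos p i s < p + B"
  using idx_lt[of i s] by (simp add: cpos_def B_def)

definition blk :: "bool list \<Rightarrow> nat \<Rightarrow> config \<Rightarrow> bool" where
  "blk vs p c \<longleftrightarrow> (\<forall>k<nq. vs ! (p + k) = (cst c = qs ! k)) \<and>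
     (\<forall>i<P. vs ! (hpos p i) = (chd c = i)) \<and>
     (\<forall>i<P. \<forall>s<ns. vs ! (cpos p i s) = (ctp c i = ss ! s))"

definition blkF :: "(nat \<Rightarrow> fm) \<Rightarrow> (nat \<Rightarrow> fm) \<Rightarrow> (nat \<Rightarrow> nat \<Rightarrow> fm) \<Rightarrow> fm list" where
  "blkF F H C = map F [0..<nq] @ map H [0..<P] @ map (\<lambda>r. C (r div ns) (r mod ns)) [0..<P * ns]"

lemma length_blkF[simp]: "length (blkF F H C) = B"
  by (simp add: blkF_def B_def)

lemma set_blkF: "set (blkF F H C) = F ` {0..<nq} \<union> H ` {0..<P} \<union> (\<lambda>r. C (r div ns) (r mod ns)) ` {0..<P*ns}"
  by (auto simp: blkF_def)

lemma blk_blkF: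
  assumes F: "\<forall>k<nq. feval vs (F k) = (cst c = qs ! k)"
    and H: "\<forall>i<P. feval vs (H i) = (chd c = i)"
    and C: "\<forall>i<P. \<forall>s<ns. feval vs (C i s) = (ctp c i = ss ! s)"
  shows "blk (X @ map (feval vs) (blkF F H C) @ Y) (length X) c"
proof -
  let ?V = "X @ map (feval vs) (blkF F H C) @ Y"
  have nthV: "?V ! (length X + r) = feval vs (blkF F H C ! r)" if "r < B" for r
    using that by (simp add: nth_append)
  have a: "\<forall>k<nq. ?V ! (length X + k) = (cst c = qs ! k)"
    using F nthV by (auto simp: B_def blkF_def nth_append)
  have b: "\<forall>i<P. ?V ! (hpos (length X) i) = (chd c = i)"
  proof (intro allI impI)
    fix i assume i: "i < P"
    have "?V ! (hpos (length X) i) = feval vs (blkF F H C ! (nq + i))"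
      using nthV[of "nq + i"] i by (simp add: hpos_def B_def add.assoc)
    also have "\<dots> = feval vs (H i)" using i by (simp add: blkF_def nth_append)
    finally show "?V ! (hpos (length X) i) = (chd c = i)" using H i by simp
  qed
  have cc: "\<forall>i<P. \<forall>s<ns. ?V ! (cpos (length X) i s) = (ctp c i = ss ! s)"
  proof (intro allI impI)
    fix i s assume i: "i < P" and s: "s < ns"
    have lt: "i * ns + s < P * ns" using idx_lt[OF i s] .
    have "?V ! (cpos (length X) i s) = feval vs (blkF F H C ! (nq + P + (i * ns + s)))"
      using nthV[of "nq + P + (i * ns + s)"] lt by (simp add: cpos_def B_def add.assoc)
    also have "\<dots> = feval vs (C ((i * ns + s) div ns) ((i * ns + s) mod ns))"
      using lt by (simp add: blkF_def nth_append)
    also have "\<dots> = feval vs (C i s)"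
    proof -
      have nz: "ns \<noteq> 0" using s by linarith
      have "(s + i * ns) div ns = i + s div ns" using div_mult_self1[OF nz, of s i] by simp
      then have "(i * ns + s) div ns = i" using s by (simp add: add.commute)
      then show ?thesis using s by simp
    qed
    finally show "?V ! (cpos (length X) i s) = (ctp c i = ss ! s)" using C i s by simp
  qed
  show ?thesis using a b cc by (simp add: blk_def)
qed

definition stF :: "nat \<Rightarrow> nat \<Rightarrow> fm" where
  "stF p q = fOr (map (\<lambda>k. if qs ! k = q then FV (p + k) else FC False) [0..<nq])"
definition clF :: "nat \<Rightarrow> nat \<Rightarrow> nat \<Rightarrow> fm" where
  "clF p i a = fOr (map (\<lambda>s. if ss ! s = a then FV (cpos p i s) else FC False) [0..<ns])"
definition hdF :: "nat \<Rightarrow> nat \<Rightarrow> fm" where "hdF p i = FV (hpos p i)"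
definition rdF :: "nat \<Rightarrow> nat \<Rightarrow> fm" where
  "rdF p a = fOr (map (\<lambda>i. FA (hdF p i) (clF p i a)) [0..<P])"
definition selF :: "nat \<Rightarrow> nat \<Rightarrow> fm" where
  "selF cb j = FA (FV (cb + j)) (fAnd (map (\<lambda>j'. FN (FV (cb + j'))) [0..<j]))"
definition appF :: "nat \<Rightarrow> nat \<times> nat \<times> nat \<times> nat \<times> move \<Rightarrow> fm" where
  "appF p t = (if tq t = qacc M then FC False else FA (stF p (tq t)) (rdF p (ta t)))"
definition AF :: "nat \<Rightarrow> nat \<Rightarrow> nat \<Rightarrow> fm" where
  "AF p cb j = FA (selF cb j) (appF p (ds ! j))"
definition noneF :: "nat \<Rightarrow> nat \<Rightarrow> fm" where
  "noneF p cb = FN (fOr (map (AF p cb) [0..<nd]))"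
definition nstF :: "nat \<Rightarrow> nat \<Rightarrow> nat \<Rightarrow> fm" where
  "nstF p cb k = FO (FA (noneF p cb) (FV (p + k)))
      (fOr (map (\<lambda>j. if tq' (ds ! j) = qs ! k then AF p cb j else FC False) [0..<nd]))"
definition nhdF :: "nat \<Rightarrow> nat \<Rightarrow> nat \<Rightarrow> fm" where
  "nhdF p cb i = FO (FA (noneF p cb) (hdF p i))
      (fOr (map (\<lambda>j. FA (AF p cb j) (fOr (map (\<lambda>i'. if mv (td (ds ! j)) i' = i then hdF p i' else FC False) [0..<P]))) [0..<nd]))"
definition nclF :: "nat \<Rightarrow> nat \<Rightarrow> nat \<Rightarrow> nat \<Rightarrow> fm" where
  "nclF p cb i s = FO (FA (hdF p i) (fOr (map (\<lambda>j. if tw (ds ! j) = ss ! s then AF p cb j else FC False) [0..<nd])))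
      (FA (FO (FN (hdF p i)) (noneF p cb)) (FV (cpos p i s)))"

definition stepF :: "nat \<Rightarrow> nat \<Rightarrow> fm list" where
  "stepF p cb = blkF (nstF p cb) (nhdF p cb) (nclF p cb)"

context
  fixes vs p c t
  assumes bl: "blk vs p c" and iv: "inv t c" and hP: "chd c < P"
begin

lemma ev_stF: "feval vs (stF p q) = (cst c = q)"
proof -
  have "feval vs (stF p q) = (\<exists>k<nq. qs ! k = q \<and> cst c = qs ! k)"
    using bl by (auto simp: stF_def blk_def)
  also have "\<dots> = (cst c = q)" using iv by (auto simp: inv_def in_set_conv_nth)
  finally show ?thesis .
qed

lemma ev_clF: "i < P \<Longrightarrow> feval vs (clF p i a) = (ctp c i = a)"
proof -
  assume i: "i < P"
  have "feval vs (clF p i a) = (\<exists>s<ns. ss ! s = a \<and> ctp c i = ss ! s)"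
    using bl i by (auto simp: clF_def blk_def)
  also have "\<dots> = (ctp c i = a)"
  proof -
    have "ctp c i \<in> set ss" using iv by (simp add: inv_def)
    then show ?thesis by (auto simp: in_set_conv_nth)
  qed
  finally show ?thesis .
qed

lemma ev_hdF: "i < P \<Longrightarrow> feval vs (hdF p i) = (chd c = i)"
  using bl unfolding hdF_def blk_def by auto

lemma ev_rdF: "feval vs (rdF p a) = (ctp c (chd c) = a)"
proof -
  have "feval vs (rdF p a) = (\<exists>i<P. chd c = i \<and> ctp c i = a)"
    by (auto simp: rdF_def ev_hdF ev_clF)
  also have "\<dots> = (ctp c (chd c) = a)" using hP by auto
  finally show ?thesis .
qed

lemma ev_appF: "feval vs (appF p tr) = app c tr"
  by (auto simp: appF_def app_def ev_stF ev_rdF)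

context
  fixes cb cs
  assumes cs: "length cs = nd" "\<forall>j<nd. vs ! (cb + j) = cs ! j"
begin

lemma ev_selF: "j < nd \<Longrightarrow> feval vs (selF cb j) = firstj cs j"
  using cs by (auto simp: selF_def firstj_def)

lemma ev_AF: "j < nd \<Longrightarrow> feval vs (AF p cb j) = taken cs c j"
  by (simp add: AF_def ev_selF ev_appF taken_def)

lemma taken_lt: "taken cs c j \<Longrightarrow> j < nd" by (simp add: taken_def)

lemma ev_noneF: "feval vs (noneF p cb) = (\<not> (\<exists>j. taken cs c j))"
proof -
  have "feval vs (noneF p cb) = (\<not> (\<exists>j<nd. taken cs c j))"
    by (auto simp: noneF_def ev_AF)
  then show ?thesis using taken_lt by blast
qed

lemma ev_nstF: "k < nq \<Longrightarrow> feval vs (nstF p cb k) = (cst (sstep cs c) = qs ! k)"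
proof (cases "\<exists>j. taken cs c j")
  case True
  then obtain j where j: "taken cs c j" by blast
  have "\<forall>j'<nd. feval vs (AF p cb j') = (j' = j)" using j taken_unique ev_AF by blast
  then show "k < nq \<Longrightarrow> ?thesis" using j sstep_taken[OF j] taken_lt[OF j] ev_noneF
    by (auto simp: nstF_def tapply_def cst_def)
next
  case False
  then show "k < nq \<Longrightarrow> ?thesis" using bl ev_noneF
    by (auto simp: nstF_def sstep_none blk_def ev_AF)
qed

lemma ev_nhdF: "i < P \<Longrightarrow> feval vs (nhdF p cb i) = (chd (sstep cs c) = i)"
proof (cases "\<exists>j. taken cs c j")
  case True
  then obtain j where j: "taken cs c j" by blast
  have A: "\<forall>j'<nd. feval vs (AF p cb j') = (j' = j)" using j taken_unique ev_AF by blast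
  have "feval vs (fOr (map (\<lambda>i'. if mv (td (ds ! j)) i' = i then hdF p i' else FC False) [0..<P]))
        = (\<exists>i'<P. mv (td (ds ! j)) i' = i \<and> chd c = i')"
    by (auto simp: ev_hdF)
  also have "\<dots> = (mv (td (ds ! j)) (chd c) = i)" using hP by auto
  finally have inner: "feval vs (fOr (map (\<lambda>i'. if mv (td (ds ! j)) i' = i then hdF p i' else FC False) [0..<P]))
        = (mv (td (ds ! j)) (chd c) = i)" .
  then show "i < P \<Longrightarrow> ?thesis" using j sstep_taken[OF j] taken_lt[OF j] ev_noneF A inner
    by (auto simp: nhdF_def tapply_def chd_def)
next
  case False
  then show "i < P \<Longrightarrow> ?thesis" using ev_noneF
    by (auto simp: nhdF_def sstep_none ev_hdF ev_AF)
qed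

lemma ev_nclF: "i < P \<Longrightarrow> s < ns \<Longrightarrow> feval vs (nclF p cb i s) = (ctp (sstep cs c) i = ss ! s)"
proof (cases "\<exists>j. taken cs c j")
  case True
  then obtain j where j: "taken cs c j" by blast
  have A: "\<forall>j'<nd. feval vs (AF p cb j') = (j' = j)" using j taken_unique ev_AF by blast
  show "i < P \<Longrightarrow> s < ns \<Longrightarrow> ?thesis" using j sstep_taken[OF j] taken_lt[OF j] ev_noneF A bl
    by (auto simp: nclF_def tapply_def ctp_def ev_hdF blk_def)
next
  case False
  then show "i < P \<Longrightarrow> s < ns \<Longrightarrow> ?thesis" using ev_noneF bl
    by (auto simp: nclF_def sstep_none ev_hdF ev_AF blk_def)
qed

lemma stepF_blk: "blk (X @ map (feval vs) (stepF p cb) @ Y) (length X) (sstep cs c)"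
  unfolding stepF_def by (rule blk_blkF) (auto simp: ev_nstF ev_nhdF ev_nclF)

end
end

end


context sim
begin

fun steps :: "nat \<Rightarrow> nat \<Rightarrow> nat \<Rightarrow> nat \<Rightarrow> gate list" where
  "steps cb0 t0 0 b = []"
| "steps cb0 t0 (Suc t) b = layer b (stepF (b - B) (cb0 + t0 * nd)) @
     steps cb0 (Suc t0) t (b + length (layer b (stepF (b - B) (cb0 + t0 * nd))))"

lemma length_stepF[simp]: "length (stepF p cb) = B"
  by (simp add: stepF_def)

lemma fok_stF: "p + nq \<le> b \<Longrightarrow> fok b (stF p q)"
  by (auto simp: stF_def)
lemma fok_clF: "i < P \<Longrightarrow> p + B \<le> b \<Longrightarrow> fok b (clF p i a)"
proof -
  assume i: "i < P" and pb: "p + B \<le> b"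
  have "\<forall>s<ns. cpos p i s < b" using cpos_lt[OF i, of _ p] pb by (meson less_le_trans)
  then show ?thesis by (auto simp: clF_def)
qed
lemma fok_hdF: "i < P \<Longrightarrow> p + B \<le> b \<Longrightarrow> fok b (hdF p i)"
  by (auto simp: hdF_def hpos_def B_def)
lemma fok_rdF: "p + B \<le> b \<Longrightarrow> fok b (rdF p a)"
  by (auto simp: rdF_def fok_hdF fok_clF)
lemma fok_AF: "p + B \<le> b \<Longrightarrow> cb + nd \<le> b \<Longrightarrow> j < nd \<Longrightarrow> fok b (AF p cb j)"
  by (auto simp: AF_def selF_def appF_def fok_rdF B_def intro!: fok_stF)
lemma fok_noneF: "p + B \<le> b \<Longrightarrow> cb + nd \<le> b \<Longrightarrow> fok b (noneF p cb)"
  by (auto simp: noneF_def fok_AF)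

lemma fok_stepF:
  assumes "p + B \<le> b" "cb + nd \<le> b"
  shows "\<forall>f \<in> set (stepF p cb). fok b f"
proof -
  have a: "k < nq \<Longrightarrow> fok b (nstF p cb k)" for k
    using assms by (auto simp: nstF_def fok_noneF fok_AF B_def)
  have h: "i < P \<Longrightarrow> fok b (nhdF p cb i)" for i
    using assms by (auto simp: nhdF_def fok_noneF fok_AF fok_hdF)
  have c: "i < P \<Longrightarrow> s < ns \<Longrightarrow> fok b (nclF p cb i s)" for i s
    using assms cpos_lt[of i s p] by (auto simp: nclF_def fok_noneF fok_AF fok_hdF)
  have "r < P * ns \<Longrightarrow> r div ns < P \<and> r mod ns < ns" for r
    by (metis less_mult_imp_div_less mod_less_divisor mult_zero_right neq0_conv not_less0)
  then show ?thesis unfolding stepF_def set_blkF using a h c by auto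
qed

lemma wfg_steps:
  "B \<le> b \<Longrightarrow> cb0 + (t0 + t) * nd \<le> b \<Longrightarrow> wfg b (steps cb0 t0 t b)"
proof (induction t arbitrary: t0 b)
  case 0 then show ?case by simp
next
  case (Suc t)
  let ?L = "layer b (stepF (b - B) (cb0 + t0 * nd))"
  have le: "cb0 + t0 * nd + nd \<le> b" using Suc.prems(2) by (simp add: algebra_simps)
  have w1: "wfg b ?L" by (rule wfg_layer) (rule fok_stepF, use Suc.prems le in auto)
  have w2: "wfg (b + length ?L) (steps cb0 (Suc t0) t (b + length ?L))"
    by (rule Suc.IH) (use Suc.prems in auto)
  show ?case using w1 w2 by (simp add: wfg_append)
qed

lemma steps_sem:
  fixes xin :: "bool list" and ch :: "nat \<Rightarrow> bool list" and c0 :: config and cb0 T :: nat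
  assumes chx: "\<forall>t' < T. \<forall>j < nd. xin ! (cb0 + t' * nd + j) = ch t' ! j"
    and chl: "\<forall>t'. length (ch t') = nd"
    and cbT: "cb0 + T * nd \<le> length xin"
    and iv0: "inv 0 c0" and TP: "T < P"
  shows "length vs = b \<Longrightarrow> B \<le> b \<Longrightarrow> length xin \<le> b \<Longrightarrow> (\<forall>i<length xin. vs ! i = xin ! i) \<Longrightarrow>
     blk vs (b - B) (srun ch tz c0) \<Longrightarrow> tz + t \<le> T \<Longrightarrow>
     \<exists>R. W (steps cb0 tz t b) vs = vs @ R \<and> blk (vs @ R) (length (vs @ R) - B) (srun ch (tz + t) c0)"
proof (induction t arbitrary: tz b vs)
  case 0 then show ?case by (auto intro: exI[of _ "[]"])
next
  case (Suc t)
  let ?cb = "cb0 + tz * nd"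
  let ?L = "layer b (stepF (b - B) ?cb)"
  let ?c = "srun ch tz c0"
  have tzT: "tz < T" using Suc.prems by simp
  have leX: "?cb + nd \<le> length xin"
  proof -
    have "?cb + nd = cb0 + Suc tz * nd" by simp
    also have "\<dots> \<le> cb0 + T * nd" using tzT by (intro add_left_mono mult_right_mono) auto
    finally show ?thesis using cbT by linarith
  qed
  have le: "?cb + nd \<le> b" using leX Suc.prems by linarith
  have fk: "\<forall>f \<in> set (stepF (b - B) ?cb). fok (length vs) f"
    using fok_stepF[of "b - B" b ?cb] Suc.prems le by auto
  obtain R1 where R1: "W ?L vs = vs @ R1 @ map (feval vs) (stepF (b - B) ?cb)"
    using layer_val[OF fk] Suc.prems(1) by auto
  have ivc: "inv tz ?c" using inv_srun[OF iv0] .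
  have hP: "chd ?c < P" using ivc tzT TP by (simp add: inv_def)
  have csx: "\<forall>j<nd. vs ! (?cb + j) = ch tz ! j"
  proof (intro allI impI)
    fix j assume j: "j < nd"
    have "?cb + j < length xin" using leX j by linarith
    then show "vs ! (?cb + j) = ch tz ! j" using Suc.prems(4) chx tzT j by simp
  qed
  have bl1: "blk ((vs @ R1) @ map (feval vs) (stepF (b - B) ?cb) @ []) (length (vs @ R1)) (sstep (ch tz) ?c)"
    by (rule stepF_blk[where t = tz, OF Suc.prems(5) ivc hP chl[rule_format] csx])
  define vs' where "vs' = vs @ R1 @ map (feval vs) (stepF (b - B) ?cb)"
  have lvs': "length vs' = b + length ?L" using R1 Suc.prems(1)
    by (metis vs'_def length_W)
  have e: "b + length ?L - B = length (vs @ R1)" using lvs' by (simp add: vs'_def)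
  have bl1': "blk vs' (b + length ?L - B) (srun ch (Suc tz) c0)"
    using bl1 unfolding e by (simp add: vs'_def)
  have pre': "\<forall>i<length xin. vs' ! i = xin ! i"
    using Suc.prems(1,3,4) by (auto simp: vs'_def nth_append)
  obtain R2 where R2: "W (steps cb0 (Suc tz) t (b + length ?L)) vs' = vs' @ R2"
      "blk (vs' @ R2) (length (vs' @ R2) - B) (srun ch (Suc tz + t) c0)"
    using Suc.IH[where tz = "Suc tz" and b = "b + length ?L" and vs = vs'] lvs' Suc.prems bl1' pre' by auto
  have "W (steps cb0 tz (Suc t) b) vs = vs' @ R2"
    using R1 R2 by (simp add: W_append vs'_def)
  then show ?case using R2 by (auto simp: vs'_def)
qed

end

locale dsim = sim +
  fixes Nn kl :: nat and Hc :: circuit and T L m :: nat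
    and ebit :: "nat \<Rightarrow> fm" and ekey :: "bool list \<Rightarrow> bool list"
  assumes Hwf: "circ_wf Hc" and Hin: "cin Hc = kl + Nn" and Hout: "length (couts Hc) = m"
    and TP: "T < P" and LP: "L \<le> P" and mP: "m < P"
    and ekey_len: "\<forall>key. length key = kl \<longrightarrow> length (ekey key) = L"
    and ebit_fok: "\<forall>i<L. fok (Nn + kl) (ebit i)"
    and ebit_ok: "\<forall>xin. Nn + kl \<le> length xin \<longrightarrow> (\<forall>i<L. feval xin (ebit i) = ekey (take kl (drop Nn xin)) ! i)"
begin

definition I :: nat where "I = Nn + kl + T * nd"
definition inH :: "nat list" where "inH = [Nn..<Nn + kl] @ [0..<Nn]"
definition g1 :: "gate list" where "g1 = map (map_gate (remap inH I)) (cgates Hc)"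
definition initF :: "fm list" where
  "initF = blkF (\<lambda>k. FC (q0 M = qs ! k)) (\<lambda>i. FC (i = 0))
     (\<lambda>i s. if i < L then (if ss ! s = 2 then ebit i else if ss ! s = 1 then FN (ebit i) else FC False)
            else FC (ss ! s = 0))"
definition b1 :: nat where "b1 = I + length g1"
definition g2 :: "gate list" where "g2 = layer b1 initF"
definition b2 :: nat where "b2 = b1 + length g2"
definition g3 :: "gate list" where "g3 = steps (Nn + kl) 0 T b2"
definition b3 :: nat where "b3 = b2 + length g3"
definition hb :: "nat \<Rightarrow> nat" where "hb i = remap inH I (couts Hc ! i)"
definition finF :: "nat \<Rightarrow> fm" where
  "finF p = FA (stF p (qacc M)) (FA (fAnd (map (\<lambda>i. FO (FA (FV (hb i)) (clF p i 2)) (FA (FN (FV (hb i))) (clF p i 1))) [0..<m]))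
      (FA (FN (clF p m 1)) (FN (clF p m 2))))"
definition g4 :: "gate list" where "g4 = layer b3 [finF (b3 - B)]"
definition Dc :: circuit where
  "Dc = \<lparr> cin = I, cgates = g1 @ g2 @ g3 @ g4, couts = [b3 + length g4 - 1] \<rparr>"

lemma length_inH: "length inH = cin Hc" by (simp add: inH_def Hin)
lemma inH_lt: "\<forall>i \<in> set inH. i < I" by (auto simp: inH_def I_def)
lemma hb_lt: "i < m \<Longrightarrow> hb i < b1"
proof -
  assume i: "i < m"
  have "couts Hc ! i < cin Hc + length (cgates Hc)" using Hwf i Hout by (auto simp: circ_wf_def)
  then show ?thesis using inH_lt length_inH
    by (auto simp: hb_def remap_def b1_def g1_def) (metis nth_mem trans_less_add1)
qed

lemma B_le_b2: "B \<le> b2 - b1"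
  by (simp add: b2_def g2_def length_layer initF_def)

lemma I_le_b1: "I \<le> b1" by (simp add: b1_def)
lemma b1_le_b2: "b1 \<le> b2" by (simp add: b2_def)
lemma b2_le_b3: "b2 \<le> b3" by (simp add: b3_def)

lemma fok_initF: "\<forall>f \<in> set initF. fok b1 f"
proof -
  have "\<forall>i<L. fok b1 (ebit i)" using ebit_fok fok_mono[of "Nn + kl" _ b1] I_le_b1
    by (auto simp: I_def)
  then show ?thesis unfolding initF_def set_blkF by auto
qed

lemma fok_finF: "fok b3 (finF (b3 - B))"
proof -
  have bb: "b3 - B + B \<le> b3" using B_le_b2 b1_le_b2 b2_le_b3 by linarith
  have "\<forall>i<m. hb i < b3" using hb_lt b1_le_b2 b2_le_b3 by (meson less_le_trans)
  then show ?thesis using bb mP B_le_b2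
    by (auto simp: finF_def fok_clF intro!: fok_stF simp: B_def)
qed


lemma inv_init: "length e = L \<Longrightarrow> inv 0 (ntm_init M e)"
  using q0_qs ss0 ss1 ss2 by (auto simp: inv_def ntm_init_def cst_def chd_def ctp_def sym_def)

lemma sym_eq: "(sym b = a) = ((b \<and> a = 2) \<or> (\<not> b \<and> a = 1))"
  by (auto simp: sym_def)

lemma Dc_eval:
  assumes ly: "length y = Nn" and lu: "length u = kl + T * nd"
  shows "ceval Dc (y @ u) = [cst (srun (\<lambda>t. map (\<lambda>j. u ! (kl + t * nd + j)) [0..<nd]) T (ntm_init M (ekey (take kl u)))) = qacc M \<and>
     tape_output (ctp (srun (\<lambda>t. map (\<lambda>j. u ! (kl + t * nd + j)) [0..<nd]) T (ntm_init M (ekey (take kl u))))) (ceval Hc (take kl u @ y))]"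
proof -
  define xin where "xin = y @ u"
  define key where "key = take kl u"
  define chx where "chx = (\<lambda>t. map (\<lambda>j. u ! (kl + t * nd + j)) [0..<nd])"
  define c0 where "c0 = ntm_init M (ekey key)"
  define cf where "cf = srun chx T c0"
  have lxin: "length xin = I" using ly lu by (simp add: xin_def I_def)
  have lkey: "length key = kl" using lu by (simp add: key_def)
  have le: "length (ekey key) = L" using ekey_len lkey by simp
  define v1 where "v1 = W g1 xin"
  have lv1: "length v1 = b1" by (simp add: v1_def b1_def lxin)
  have v1pre: "\<forall>i<I. v1 ! i = xin ! i" using lxin by (simp add: v1_def W_nth_pre)
  have mapin: "map ((!) xin) inH = key @ y"
  proof -
    have "map ((!) xin) [Nn..<Nn + kl] = key"
      by (rule nth_equalityI) (use ly lu in \<open>auto simp: xin_def key_def nth_append\<close>)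
    moreover have "map ((!) xin) [0..<Nn] = y"
      by (rule nth_equalityI) (use ly in \<open>auto simp: xin_def nth_append\<close>)
    ultimately show ?thesis by (simp add: inH_def)
  qed
  have Hw: "wfg (length inH) (cgates Hc)" using Hwf length_inH by (simp add: circ_wf_wfg)
  have E: "\<forall>w < length inH + length (cgates Hc). v1 ! remap inH I w = W (cgates Hc) (key @ y) ! w"
    using W_embed[OF Hw, of xin] inH_lt lxin mapin by (simp add: v1_def g1_def)
  have hbv: "\<forall>i<m. v1 ! hb i = ceval Hc (key @ y) ! i"
  proof (intro allI impI)
    fix i assume i: "i < m"
    have "couts Hc ! i < length inH + length (cgates Hc)"
      using Hwf i Hout length_inH by (auto simp: circ_wf_def)
    then show "v1 ! hb i = ceval Hc (key @ y) ! i"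
      using E i Hout by (simp add: hb_def ceval_def wires_W)
  qed
  have fk2: "\<forall>f \<in> set initF. fok (length v1) f" using fok_initF lv1 by simp
  obtain R where R: "W g2 v1 = v1 @ R @ map (feval v1) initF"
    using layer_val[OF fk2] lv1 by (auto simp: g2_def)
  define v2 where "v2 = W g2 v1"
  have lv2: "length v2 = b2" by (simp add: v2_def b2_def lv1)
  have ebv: "\<forall>i<L. feval v1 (ebit i) = ekey key ! i"
  proof (intro allI impI)
    fix i assume i: "i < L"
    have "feval v1 (ebit i) = feval xin (ebit i)"
      by (rule feval_ext[of "Nn + kl"]) (use ebit_fok i v1pre in \<open>auto simp: I_def\<close>)
    also have "\<dots> = ekey (take kl (drop Nn xin)) ! i" using ebit_ok lxin i by (simp add: I_def)
    also have "take kl (drop Nn xin) = key" using ly by (simp add: xin_def key_def)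
    finally show "feval v1 (ebit i) = ekey key ! i" .
  qed
  have bl2: "blk ((v1 @ R) @ map (feval v1) initF @ []) (length (v1 @ R)) c0"
    unfolding initF_def
  proof (rule blk_blkF)
    show "\<forall>k<nq. feval v1 (FC (q0 M = qs ! k)) = (cst c0 = qs ! k)"
      by (simp add: c0_def ntm_init_def cst_def)
    show "\<forall>i<P. feval v1 (FC (i = 0)) = (chd c0 = i)"
      by (auto simp: c0_def ntm_init_def chd_def)
    show "\<forall>i<P. \<forall>s<ns. feval v1 (if i < L then if ss ! s = 2 then ebit i else if ss ! s = 1 then FN (ebit i) else FC False
                  else FC (ss ! s = 0)) = (ctp c0 i = ss ! s)"
      using ebv le by (auto simp: c0_def ntm_init_def ctp_def sym_eq)
  qed
  have pos2: "length (v1 @ R) = b2 - B"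
    using R lv2 by (simp add: v2_def initF_def)
  have bl2': "blk v2 (b2 - B) (srun chx 0 c0)"
    using bl2 pos2 R by (simp add: v2_def)
  have v2pre: "\<forall>i<length xin. v2 ! i = xin ! i"
  proof (intro allI impI)
    fix i assume i: "i < length xin"
    then have "i < length v1" using lxin lv1 I_le_b1 by linarith
    then have "v2 ! i = v1 ! i" by (simp add: v2_def W_nth_pre)
    then show "v2 ! i = xin ! i" using v1pre i lxin by simp
  qed
  have chx1: "\<forall>t' < T. \<forall>j < nd. xin ! (Nn + kl + t' * nd + j) = chx t' ! j"
  proof (intro allI impI)
    fix t' j assume t': "t' < T" and j: "j < nd"
    have "t' * nd + j < T * nd"
    proof -
      have "t' * nd + j < t' * nd + nd" using j by simp
      also have "\<dots> = Suc t' * nd" by simp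
      also have "\<dots> \<le> T * nd" using t' by (intro mult_right_mono) auto
      finally show ?thesis .
    qed
    then show "xin ! (Nn + kl + t' * nd + j) = chx t' ! j"
      using ly lu j by (simp add: xin_def chx_def nth_append add.assoc)
  qed
  have chl: "\<forall>t'. length (chx t') = nd" by (simp add: chx_def)
  have iv0: "inv 0 c0" using inv_init le by (simp add: c0_def)
  have B2: "B \<le> b2" using B_le_b2 by linarith
  obtain R2 where R2: "W g3 v2 = v2 @ R2" "blk (v2 @ R2) (length (v2 @ R2) - B) (srun chx (0 + T) c0)"
    using steps_sem[OF chx1 chl _ iv0 TP, of v2 b2 0 T] lxin lv2 B2 v2pre bl2' I_le_b1 b1_le_b2
    by (auto simp: g3_def I_def)
  define v3 where "v3 = W g3 v2"
  have lv3: "length v3 = b3" by (simp add: v3_def b3_def lv2)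
  have bl3: "blk v3 (b3 - B) cf" using R2 lv3 by (simp add: v3_def cf_def)
  have ivf: "inv T cf" using inv_srun[OF iv0] by (simp add: cf_def)
  have hPf: "chd cf < P" using ivf TP by (simp add: inv_def)
  have v3hb: "\<forall>i<m. v3 ! hb i = ceval Hc (key @ y) ! i"
  proof (intro allI impI)
    fix i assume i: "i < m"
    have "hb i < length v1" using hb_lt[OF i] lv1 by simp
    then have "v3 ! hb i = v1 ! hb i" using lv1
      by (simp add: v3_def v2_def W_nth_pre)
    then show "v3 ! hb i = ceval Hc (key @ y) ! i" using hbv i by simp
  qed
  obtain R3 where R3: "W g4 v3 = v3 @ R3 @ [feval v3 (finF (b3 - B))]"
    using layer_val[of "[finF (b3 - B)]" v3] fok_finF lv3 by (auto simp: g4_def)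
  have lhy: "length (ceval Hc (key @ y)) = m" by (simp add: ceval_def Hout)
  have fin: "feval v3 (finF (b3 - B)) = (cst cf = qacc M \<and> tape_output (ctp cf) (ceval Hc (key @ y)))"
  proof -
    have st: "feval v3 (stF (b3 - B) (qacc M)) = (cst cf = qacc M)"
      by (rule ev_stF[OF bl3 ivf hPf])
    have cl: "\<And>i a. i < P \<Longrightarrow> feval v3 (clF (b3 - B) i a) = (ctp cf i = a)"
      by (rule ev_clF[OF bl3 ivf hPf])
    have mp: "\<forall>i<m. i < P" using mP by simp
    show ?thesis
      unfolding finF_def tape_output_def lhy
      using st cl[OF mP] v3hb mp by (auto simp: cl sym_def)
  qed
  have "W (cgates Dc) (y @ u) = v3 @ R3 @ [feval v3 (finF (b3 - B))]"
    using R3 by (simp add: Dc_def W_append xin_def[symmetric] v1_def[symmetric] v2_def[symmetric] v3_def[symmetric])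
  moreover have "length (v3 @ R3) = b3 + length g4 - 1"
    using R3 lv3 by (metis length_W length_append length_append_singleton diff_Suc_1 add.assoc)
  ultimately have "W (cgates Dc) (y @ u) ! (b3 + length g4 - 1) = feval v3 (finF (b3 - B))"
    by (metis append_assoc nth_append_length)
  moreover have "ceval Dc (y @ u) = [W (cgates Dc) (y @ u) ! (b3 + length g4 - 1)]"
    by (simp add: ceval_def wires_W Dc_def)
  ultimately have "ceval Dc (y @ u) = [feval v3 (finF (b3 - B))]" by simp
  then show ?thesis using fin by (simp add: cf_def chx_def c0_def key_def)
qed

lemma Dc_wf: "circ_wf Dc"
proof -
  have w1: "wfg I g1" unfolding g1_def
    by (rule wfg_embed) (use Hwf length_inH inH_lt in \<open>auto simp: circ_wf_wfg\<close>)
  have w2: "wfg b1 g2" unfolding g2_def by (rule wfg_layer[OF fok_initF])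
  have w3: "wfg b2 g3" unfolding g3_def
    by (rule wfg_steps) (use B_le_b2 I_le_b1 b1_le_b2 in \<open>auto simp: I_def\<close>)
  have w4: "wfg b3 g4" unfolding g4_def by (rule wfg_layer) (use fok_finF in auto)
  have "wfg I (g1 @ g2 @ g3 @ g4)" using w1 w2 w3 w4
    by (simp add: wfg_append b1_def b2_def b3_def add.assoc)
  moreover have "b3 + length g4 - 1 < I + length (g1 @ g2 @ g3 @ g4)"
    by (simp add: g4_def length_layer b3_def b2_def b1_def)
  ultimately show ?thesis by (simp add: circ_wf_wfg Dc_def)
qed

end


lemma divmod_aux: "j < (n::nat) \<Longrightarrow> (i * n + j) div n = i \<and> (i * n + j) mod n = j"
proof -
  assume j: "j < n"
  then have nz: "n \<noteq> 0" by linarith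
  have "(j + i * n) div n = i + j div n" using div_mult_self1[OF nz, of j i] by simp
  then have "(i * n + j) div n = i" using j by (simp add: add.commute)
  moreover have "(i * n + j) mod n = j" using j by (simp add: add.commute)
  ultimately show ?thesis by simp
qed

context dsim
begin

lemma Dc_cin: "cin Dc = Nn + (kl + T * nd)" by (simp add: Dc_def I_def)
lemma Dc_couts: "length (couts Dc) = 1" by (simp add: Dc_def)

lemma Dc_accepts:
  assumes ly: "length y = Nn"
    and Tb: "\<forall>key t cf. length key = kl \<longrightarrow> (ntm_step M ^^ t) (ntm_init M (ekey key)) cf \<longrightarrow> t \<le> T"
  shows "nd_accepts Dc (kl + T * nd) y \<longleftrightarrow>
    (\<exists>key. length key = kl \<and> ntm_accepts_with M (ekey key) (ceval Hc (key @ y)))"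
proof
  assume "nd_accepts Dc (kl + T * nd) y"
  then obtain u where lu: "length u = kl + T * nd" and acc: "ceval Dc (y @ u) = [True]"
    by (auto simp: nd_accepts_def)
  define chx where "chx = (\<lambda>t. map (\<lambda>j. u ! (kl + t * nd + j)) [0..<nd])"
  define key where "key = take kl u"
  define cf where "cf = srun chx T (ntm_init M (ekey key))"
  have "cst cf = qacc M \<and> tape_output (ctp cf) (ceval Hc (key @ y))"
    using Dc_eval[OF ly lu] acc by (simp add: cf_def chx_def key_def)
  moreover obtain t where "(ntm_step M ^^ t) (ntm_init M (ekey key)) cf"
    using srun_sound rtranclp_imp_relpowp cf_def by metis
  moreover have "cf = (cst cf, chd cf, ctp cf)" by (simp add: cst_def chd_def ctp_def)
  ultimately have "ntm_accepts_with M (ekey key) (ceval Hc (key @ y))"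
    unfolding ntm_accepts_with_def by metis
  moreover have "length key = kl" using lu by (simp add: key_def)
  ultimately show "\<exists>key. length key = kl \<and> ntm_accepts_with M (ekey key) (ceval Hc (key @ y))" by blast
next
  assume "\<exists>key. length key = kl \<and> ntm_accepts_with M (ekey key) (ceval Hc (key @ y))"
  then obtain key t h tp where lk: "length key = kl"
    and run: "(ntm_step M ^^ t) (ntm_init M (ekey key)) (qacc M, h, tp)"
    and out: "tape_output tp (ceval Hc (key @ y))"
    unfolding ntm_accepts_with_def by blast
  define c0 where "c0 = ntm_init M (ekey key)"
  have tT: "t \<le> T" using Tb lk run by blast
  obtain ch where chl: "\<forall>i. length (ch i) = nd" and chr: "srun ch t c0 = (qacc M, h, tp)"
    using srun_complete[OF run] c0_def by blast
  define ch' where "ch' = (\<lambda>i. if i < t then ch i else replicate nd False)"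
  have chl': "\<forall>i. length (ch' i) = nd" using chl by (simp add: ch'_def)
  have "srun ch' t c0 = (qacc M, h, tp)" using chr srun_cong[of t ch' ch c0] by (simp add: ch'_def)
  then have r': "srun ch' T c0 = (qacc M, h, tp)"
    using srun_acc_stay[of ch' t c0 "T - t"] tT by (simp add: cst_def)
  define u where "u = key @ map (\<lambda>r. ch' (r div nd) ! (r mod nd)) [0..<T * nd]"
  have lu: "length u = kl + T * nd" using lk by (simp add: u_def)
  have tk: "take kl u = key" using lk by (simp add: u_def)
  have chx: "\<forall>i<T. map (\<lambda>j. u ! (kl + i * nd + j)) [0..<nd] = ch' i"
  proof (intro allI impI)
    fix i assume i: "i < T"
    show "map (\<lambda>j. u ! (kl + i * nd + j)) [0..<nd] = ch' i"
    proof (rule nth_equalityI)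
      show "length (map (\<lambda>j. u ! (kl + i * nd + j)) [0..<nd]) = length (ch' i)" using chl' by simp
    next
      fix j assume "j < length (map (\<lambda>j. u ! (kl + i * nd + j)) [0..<nd])"
      then have j: "j < nd" by simp
      have lt: "i * nd + j < T * nd"
      proof -
        have "i * nd + j < i * nd + nd" using j by simp
        also have "\<dots> = Suc i * nd" by simp
        also have "\<dots> \<le> T * nd" using i by (intro mult_right_mono) auto
        finally show ?thesis .
      qed
      have dm: "(i * nd + j) div nd = i" "(i * nd + j) mod nd = j" using divmod_aux[OF j] by auto
      show "map (\<lambda>j. u ! (kl + i * nd + j)) [0..<nd] ! j = ch' i ! j"
        using lt j lk dm by (simp add: u_def nth_append add.assoc)
    qed
  qed
  have "srun (\<lambda>i. map (\<lambda>j. u ! (kl + i * nd + j)) [0..<nd]) T c0 = srun ch' T c0"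
    by (rule srun_cong) (use chx in auto)
  then have "ceval Dc (y @ u) = [True]"
    using Dc_eval[OF ly lu] r' out by (simp add: tk c0_def cst_def ctp_def)
  then show "nd_accepts Dc (kl + T * nd) y" using lu by (auto simp: nd_accepts_def)
qed

end


lemma fsize_fOr_le: "(\<forall>f\<in>set fs. fsize f \<le> S) \<Longrightarrow> fsize (fOr fs) \<le> length fs * (S + 1) + 1"
  by (induction fs) (auto simp: fOr_def)
lemma fsize_fAnd_le: "(\<forall>f\<in>set fs. fsize f \<le> S) \<Longrightarrow> fsize (fAnd fs) \<le> length fs * (S + 1) + 1"
  by (induction fs) (auto simp: fAnd_def)

lemma pow_ge1: "1 \<le> (K::nat) \<Longrightarrow> 1 \<le> K ^ e" by simp

lemma sz_fOr:
  assumes "\<forall>f\<in>set fs. fsize f \<le> K ^ e" "length fs \<le> Z" "4 * Z \<le> K" "1 \<le> Z"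
  shows "fsize (fOr fs) \<le> K ^ Suc e"
proof -
  have K1: "1 \<le> K ^ e" using assms by simp
  have "fsize (fOr fs) \<le> length fs * (K ^ e + 1) + 1" using fsize_fOr_le[OF assms(1)] .
  also have "\<dots> \<le> Z * (K ^ e + 1) + 1" using assms(2) by (intro add_right_mono mult_right_mono) auto
  also have "\<dots> \<le> Z * (K ^ e + K ^ e) + Z * K ^ e" using K1 assms(4)
    by (intro add_mono mult_left_mono) (auto intro: order_trans[OF _ mult_mono[of 1 Z 1 "K^e"]])
  also have "\<dots> = (3 * Z) * K ^ e" by (simp add: algebra_simps)
  also have "\<dots> \<le> K * K ^ e" using assms(3) by (intro mult_right_mono) auto
  finally show ?thesis by simp
qed

lemma sz_fAnd:
  assumes "\<forall>f\<in>set fs. fsize f \<le> K ^ e" "length fs \<le> Z" "4 * Z \<le> K" "1 \<le> Z"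
  shows "fsize (fAnd fs) \<le> K ^ Suc e"
proof -
  have "fsize (fAnd fs) = fsize (fOr fs)" by (simp add: fsize_fAnd fsize_fOr)
  then show ?thesis using sz_fOr[OF assms] by simp
qed

lemma sz_FA: "fsize f \<le> K ^ e \<Longrightarrow> fsize g \<le> K ^ e \<Longrightarrow> 3 \<le> K \<Longrightarrow> fsize (FA f g) \<le> K ^ Suc e"
proof -
  assume a: "fsize f \<le> K ^ e" "fsize g \<le> K ^ e" "3 \<le> K"
  have one: "1 \<le> K ^ e" using a by simp
  have "fsize (FA f g) = fsize f + fsize g + 1" by simp
  then have "fsize (FA f g) \<le> 3 * K ^ e" using a one by linarith
  also have "\<dots> \<le> K * K ^ e" using a by (intro mult_right_mono) auto
  finally show ?thesis by simp
qed
lemma sz_FO: "fsize f \<le> K ^ e \<Longrightarrow> fsize g \<le> K ^ e \<Longrightarrow> 3 \<le> K \<Longrightarrow> fsize (FO f g) \<le> K ^ Suc e"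
  using sz_FA[of f K e g] by simp
lemma sz_FN: "fsize f \<le> K ^ e \<Longrightarrow> 3 \<le> K \<Longrightarrow> fsize (FN f) \<le> K ^ Suc e"
  using sz_FA[of f K e f] by simp
lemma sz_if: "fsize f \<le> K ^ e \<Longrightarrow> fsize g \<le> K ^ e \<Longrightarrow> fsize (if b then f else g) \<le> K ^ e"
  by simp
lemma sz_fOr_map: "(\<And>i. i < n \<Longrightarrow> fsize (g i) \<le> K ^ e) \<Longrightarrow> n \<le> Z \<Longrightarrow> 4 * Z \<le> K \<Longrightarrow> 1 \<le> Z \<Longrightarrow>
   fsize (fOr (map g [0..<n])) \<le> K ^ Suc e"
  by (rule sz_fOr) auto
lemma sz_fAnd_map: "(\<And>i. i < n \<Longrightarrow> fsize (g i) \<le> K ^ e) \<Longrightarrow> n \<le> Z \<Longrightarrow> 4 * Z \<le> K \<Longrightarrow> 1 \<le> Z \<Longrightarrow>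
   fsize (fAnd (map g [0..<n])) \<le> K ^ Suc e"
  by (rule sz_fAnd) auto

lemma length_layer_le: "(\<forall>f\<in>set fs. fsize f \<le> S) \<Longrightarrow> length (layer b fs) \<le> length fs * (S + 1)"
  unfolding length_layer by (induction fs) auto

context sim
begin

definition Zs :: nat where "Zs = P + nd + nq + ns + 1"
definition Ks :: nat where "Ks = 4 * Zs"

lemma Zs1: "1 \<le> Zs" by (simp add: Zs_def)
lemma Ks3: "3 \<le> Ks" by (simp add: Ks_def Zs_def)
lemma Ks1: "1 \<le> Ks" by (simp add: Ks_def Zs_def)
lemma KZ: "4 * Zs \<le> Ks" by (simp add: Ks_def)
lemma PZ: "P \<le> Zs" and ndZ: "nd \<le> Zs" and nqZ: "nq \<le> Zs" and nsZ: "ns \<le> Zs"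
  by (simp_all add: Zs_def)

lemma sKFV: "fsize (FV i) \<le> Ks ^ e" using one_le_power[OF Ks1] by simp
lemma sKFC: "fsize (FC b) \<le> Ks ^ e" using one_le_power[OF Ks1] by simp
lemmas szI = sz_fOr_map[OF _ _ KZ Zs1] sz_fAnd_map[OF _ _ KZ Zs1] sz_FA[OF _ _ Ks3] sz_FO[OF _ _ Ks3] sz_FN[OF _ Ks3] sz_if sKFV sKFC

lemma sz_hdF: "fsize (hdF p i) \<le> Ks ^ e" unfolding hdF_def by (rule sKFV)
lemma sz_stF: "fsize (stF p q) \<le> Ks ^ Suc e"
  unfolding stF_def by (intro szI) (auto simp: nqZ)
lemma sz_clF: "fsize (clF p i a) \<le> Ks ^ Suc e"
  unfolding clF_def by (intro szI) (auto simp: nsZ)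
lemma sz_rdF: "fsize (rdF p a) \<le> Ks ^ Suc (Suc (Suc (e)))"
  unfolding rdF_def by (intro szI sz_hdF sz_clF) (auto simp: PZ)
lemma sz_appF: "fsize (appF p t) \<le> Ks ^ Suc (Suc (Suc (Suc (e))))"
  unfolding appF_def by (intro szI sz_stF sz_rdF)
lemma sz_selF: "j \<le> Zs \<Longrightarrow> fsize (selF cb j) \<le> Ks ^ Suc (Suc (Suc (e)))"
  unfolding selF_def by (intro szI) auto
lemma sz_AF: "j < nd \<Longrightarrow> fsize (AF p cb j) \<le> Ks ^ Suc (Suc (Suc (Suc (Suc (e)))))"
  unfolding AF_def by (intro szI sz_selF sz_appF) (use ndZ in auto)
lemma sz_AFor: "fsize (fOr (map (\<lambda>j. if b j then AF p cb j else FC False) [0..<nd])) \<le> Ks ^ Suc (Suc (Suc (Suc (Suc (Suc (e))))))"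
  by (intro szI sz_AF) (auto simp: ndZ)
lemma sz_noneF: "fsize (noneF p cb) \<le> Ks ^ Suc (Suc (Suc (Suc (Suc (Suc (Suc (e)))))))"
  unfolding noneF_def by (intro szI sz_AF) (auto simp: ndZ)
lemma sz_nstF: "fsize (nstF p cb k) \<le> Ks ^ Suc (Suc (Suc (Suc (Suc (Suc (Suc (Suc (Suc (Suc (e))))))))))"
  unfolding nstF_def by (intro szI sz_noneF sz_AFor sz_AF) (auto simp: ndZ)
lemma sz_nhdF: "fsize (nhdF p cb i) \<le> Ks ^ Suc (Suc (Suc (Suc (Suc (Suc (Suc (Suc (Suc (Suc (e))))))))))"
  unfolding nhdF_def by (intro szI sz_noneF sz_AF sz_hdF) (auto simp: ndZ PZ)
lemma sz_nclF: "fsize (nclF p cb i s) \<le> Ks ^ Suc (Suc (Suc (Suc (Suc (Suc (Suc (Suc (Suc (Suc (e))))))))))"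
  unfolding nclF_def by (intro szI sz_noneF sz_AFor sz_hdF)

lemma sz_stepF: "\<forall>f \<in> set (stepF p cb). fsize f \<le> Ks ^ 10"
proof -
  have e: "Suc (Suc (Suc (Suc (Suc (Suc (Suc (Suc (Suc (Suc (0)))))))))) = (10::nat)" by simp
  show ?thesis unfolding stepF_def set_blkF
    using sz_nstF[of p cb _ 0] sz_nhdF[of p cb _ 0] sz_nclF[of p cb _ _ 0] unfolding e by auto
qed

lemma length_steps: "length (steps cb0 t0 t b) \<le> t * (B * (Ks ^ 10 + 1))"
proof (induction t arbitrary: t0 b)
  case 0 then show ?case by simp
next
  case (Suc t)
  have a: "length (layer b (stepF (b - B) (cb0 + t0 * nd))) \<le> B * (Ks ^ 10 + 1)"
    using length_layer_le[OF sz_stepF] by simp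
  have b: "length (steps cb0 (Suc t0) t (b + length (layer b (stepF (b - B) (cb0 + t0 * nd))))) \<le> t * (B * (Ks ^ 10 + 1))"
    by (rule Suc.IH)
  show ?case using a b by simp
qed

end

context dsim
begin

lemma sz_finF: "fsize (finF p) \<le> Ks ^ 6"
proof -
  have "fsize (finF p) \<le> Ks ^ Suc (Suc (Suc (Suc (Suc (Suc (0))))))"
    unfolding finF_def by (intro szI sz_stF sz_clF) (use mP PZ in auto)
  moreover have "Suc (Suc (Suc (Suc (Suc (Suc (0)))))) = (6::nat)" by simp
  ultimately show ?thesis by metis
qed

lemma csize_Dc:
  assumes ebs: "\<forall>i<L. fsize (ebit i) = 1"
  shows "csize Dc \<le> Nn + kl + T * nd + length (cgates Hc) + 3 * B + T * (B * (Ks ^ 10 + 1)) + Ks ^ 6 + 2"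
proof -
  have l2: "length g2 \<le> 3 * B"
  proof -
    have "\<forall>f\<in>set initF. fsize f \<le> 2" using ebs unfolding initF_def set_blkF
      by (auto dest: less_mult_imp_div_less)
    then have "length g2 \<le> length initF * 3" using length_layer_le[of initF 2 b1] by (simp add: g2_def)
    then show ?thesis by (simp add: initF_def)
  qed
  have l3: "length g3 \<le> T * (B * (Ks ^ 10 + 1))" unfolding g3_def by (rule length_steps)
  have l4: "length g4 \<le> Ks ^ 6 + 1" using length_layer_le[of "[finF (b3 - B)]" "Ks ^ 6" b3] sz_finF
    by (simp add: g4_def)
  show ?thesis using l2 l3 l4 by (simp add: csize_def Dc_def I_def g1_def)
qed

end


definition rk :: "circuit \<Rightarrow> nat \<Rightarrow> nat \<Rightarrow> nat" where
  "rk Gc k = remap (map (\<lambda>i. cin Gc + length (cgates Gc) + i) [0..<k] @ couts Gc) (cin Gc + length (cgates Gc) + k)"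
definition epre :: "circuit \<Rightarrow> circuit \<Rightarrow> nat \<Rightarrow> bool list" where
  "epre Gc Hc k = enc_nat (cin Gc) @ enc_nat (length (cgates Gc) + k + length (cgates Hc)) @ concat (map enc_gate (cgates Gc))"
definition epost :: "circuit \<Rightarrow> circuit \<Rightarrow> nat \<Rightarrow> bool list" where
  "epost Gc Hc k = concat (map enc_gate (map (map_gate (rk Gc k)) (cgates Hc))) @ enc_nat (length (couts Hc))
     @ concat (map enc_nat (map (rk Gc k) (couts Hc)))"

lemma enc_plug: "enc_circuit (plug Gc Hc key) = epre Gc Hc (length key) @ concat (map (\<lambda>b. [False, b]) key) @ epost Gc Hc (length key)"
proof -
  have "concat (map enc_gate (map GConst key)) = concat (map (\<lambda>b. [False, b]) key)"
    by (induction key) (auto simp: enc_nat_def)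
  then show ?thesis
    by (simp add: plugeq enc_circuit_def epre_def epost_def rk_def add.assoc)
qed

lemma concat_pairs_nth: "j < 2 * length key \<Longrightarrow> concat (map (\<lambda>b. [False, b]) key) ! j = (if even j then False else key ! (j div 2))"
proof (induction key arbitrary: j)
  case Nil then show ?case by simp
next
  case (Cons b key)
  show ?case
  proof (cases j)
    case 0 then show ?thesis by simp
  next
    case (Suc j1)
    show ?thesis
    proof (cases j1)
      case 0 then show ?thesis using Suc by simp
    next
      case (Suc j2)
      then have "j2 < 2 * length key" using Cons.prems \<open>j = Suc j1\<close> by simp
      then show ?thesis using Cons.IH[of j2] Suc \<open>j = Suc j1\<close> by simp
    qed
  qed
qed

lemma length_concat_pairs[simp]: "length (concat (map (\<lambda>b. [False, b]) key)) = 2 * length key"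
  by (induction key) auto

definition ebitF :: "bool list \<Rightarrow> bool list \<Rightarrow> nat \<Rightarrow> nat \<Rightarrow> nat \<Rightarrow> fm" where
  "ebitF pre post k Nn i = (if i < length pre then FC (pre ! i)
     else if i < length pre + 2 * k then (if even (i - length pre) then FC False else FV (Nn + (i - length pre) div 2))
     else FC (post ! (i - length pre - 2 * k)))"

lemma ebitF_size: "fsize (ebitF pre post k Nn i) = 1"
  by (simp add: ebitF_def)

lemma ebitF_fok: "fok (Nn + k) (ebitF pre post k Nn i)"
  by (auto simp: ebitF_def)

lemma ebitF_ok:
  assumes lk: "length key = k" and kx: "\<forall>j<k. xin ! (Nn + j) = key ! j"
  shows "feval xin (ebitF pre post k Nn i) = (pre @ concat (map (\<lambda>b. [False, b]) key) @ post) ! i"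
proof -
  consider (a) "i < length pre" | (b) "length pre \<le> i" "i < length pre + 2 * k" | (c) "length pre + 2 * k \<le> i"
    by linarith
  then show ?thesis
  proof cases
    case a then show ?thesis by (simp add: ebitF_def nth_append)
  next
    case b
    define j where "j = i - length pre"
    have j: "j < 2 * length key" using b lk by (simp add: j_def)
    have jd: "j div 2 < k" using j lk by auto
    have "(pre @ concat (map (\<lambda>b. [False, b]) key) @ post) ! i = concat (map (\<lambda>b. [False, b]) key) ! j"
      using b j by (simp add: nth_append j_def)
    also have "\<dots> = (if even j then False else key ! (j div 2))" by (rule concat_pairs_nth[OF j])
    also have "\<dots> = feval xin (ebitF pre post k Nn i)"
      using b kx jd by (simp add: ebitF_def j_def[symmetric])
    finally show ?thesis by simp
  next
    case c
    have c1: "\<not> i < length pre" "\<not> i < length pre + 2 * k" "\<not> i - length pre < 2 * k" using c by auto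
    then show ?thesis using lk by (simp add: ebitF_def nth_append)
  qed
qed

definition pb :: "(nat \<Rightarrow> nat) \<Rightarrow> bool" where
  "pb f \<longleftrightarrow> (\<exists>c. \<forall>n. f n \<le> c * Suc n ^ c)"

lemma pow_mono_exp: "1 \<le> (x::nat) \<Longrightarrow> a \<le> b \<Longrightarrow> x ^ a \<le> x ^ b"
  by (simp add: power_increasing)

lemma poly_bounded_pb: "poly_bounded f \<Longrightarrow> pb f"
proof -
  assume "poly_bounded f"
  then obtain c where c: "\<forall>n. f n \<le> c * n ^ c + c" by (auto simp: poly_bounded_def)
  have "f n \<le> (2 * c) * Suc n ^ (2 * c)" for n
  proof -
    have "n ^ c \<le> Suc n ^ c" by (simp add: power_mono)
    moreover have "Suc n ^ c \<le> Suc n ^ (2 * c)" by (rule pow_mono_exp) auto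
    ultimately have A: "c * n ^ c \<le> c * Suc n ^ (2 * c)" by (intro mult_left_mono) auto
    have B: "c \<le> c * Suc n ^ (2 * c)" by simp
    have "c * n ^ c + c \<le> c * Suc n ^ (2 * c) + c * Suc n ^ (2 * c)" using A B by (rule add_mono)
    also have "\<dots> = 2 * c * Suc n ^ (2 * c)" by simp
    finally have "c * n ^ c + c \<le> 2 * c * Suc n ^ (2 * c)" .
    then show ?thesis using c by (meson order_trans)
  qed
  then show ?thesis unfolding pb_def by blast
qed

lemma pb_poly_bounded: "pb f \<Longrightarrow> poly_bounded f"
proof -
  assume "pb f"
  then obtain c where c: "\<forall>n. f n \<le> c * Suc n ^ c" by (auto simp: pb_def)
  define C where "C = c * 2 ^ c + c"
  have "f n \<le> C * n ^ C + C" for n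
  proof (cases "n = 0")
    case True
    then have "f n \<le> c" using c[rule_format, of 0] by simp
    then show ?thesis by (simp add: C_def)
  next
    case False
    then have n1: "1 \<le> n" by simp
    have "Suc n ^ c \<le> (2 * n) ^ c" using n1 by (intro power_mono) auto
    also have "\<dots> = 2 ^ c * n ^ c" by (simp add: power_mult_distrib)
    also have "\<dots> \<le> 2 ^ c * n ^ C" using n1 by (intro mult_left_mono pow_mono_exp) (auto simp: C_def)
    finally have "f n \<le> c * (2 ^ c * n ^ C)" using c by (meson mult_le_mono2 order_trans)
    also have "\<dots> \<le> C * n ^ C" by (simp add: C_def mult.assoc)
    finally show ?thesis by simp
  qed
  then show ?thesis unfolding poly_bounded_def by blast
qed

lemma pb_const: "pb (\<lambda>n. a)"
proof -
  have "a \<le> a * Suc n ^ a" for n by simp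
  then show ?thesis unfolding pb_def by blast
qed

lemma pb_id: "pb (\<lambda>n. n)"
proof -
  have "n \<le> 1 * Suc n ^ 1" for n by simp
  then show ?thesis unfolding pb_def by blast
qed

lemma pb_add: "pb f \<Longrightarrow> pb g \<Longrightarrow> pb (\<lambda>n. f n + g n)"
proof -
  assume "pb f" "pb g"
  then obtain c1 c2 where c1: "\<forall>n. f n \<le> c1 * Suc n ^ c1" and c2: "\<forall>n. g n \<le> c2 * Suc n ^ c2"
    by (auto simp: pb_def)
  have "f n + g n \<le> (c1 + c2) * Suc n ^ (c1 + c2)" for n
  proof -
    have "Suc n ^ c1 \<le> Suc n ^ (c1 + c2)" "Suc n ^ c2 \<le> Suc n ^ (c1 + c2)"
      by (intro pow_mono_exp; simp)+
    then have "c1 * Suc n ^ c1 + c2 * Suc n ^ c2 \<le> (c1 + c2) * Suc n ^ (c1 + c2)"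
      by (simp add: add_mult_distrib add_mono)
    then show ?thesis using c1 c2 by (meson add_mono order_trans)
  qed
  then show ?thesis unfolding pb_def by blast
qed

lemma pb_mult: "pb f \<Longrightarrow> pb g \<Longrightarrow> pb (\<lambda>n. f n * g n)"
proof -
  assume "pb f" "pb g"
  then obtain c1 c2 where c1: "\<forall>n. f n \<le> c1 * Suc n ^ c1" and c2: "\<forall>n. g n \<le> c2 * Suc n ^ c2"
    by (auto simp: pb_def)
  define C where "C = c1 * c2 + c1 + c2"
  have "f n * g n \<le> C * Suc n ^ C" for n
  proof -
    have "f n * g n \<le> (c1 * Suc n ^ c1) * (c2 * Suc n ^ c2)" using c1 c2 by (intro mult_mono) auto
    also have "\<dots> = (c1 * c2) * Suc n ^ (c1 + c2)" by (simp add: power_add algebra_simps)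
    also have "\<dots> \<le> C * Suc n ^ C" by (intro mult_mono pow_mono_exp) (auto simp: C_def)
    finally show ?thesis .
  qed
  then show ?thesis unfolding pb_def by blast
qed

lemma pb_pow: "pb f \<Longrightarrow> pb (\<lambda>n. f n ^ e)"
proof (induction e)
  case 0 then show ?case using pb_const[of 1] by simp
next
  case (Suc e) then show ?case using pb_mult[of f "\<lambda>n. f n ^ e"] by simp
qed

lemma pb_mono: "(\<forall>n. g n \<le> f n) \<Longrightarrow> pb f \<Longrightarrow> pb g"
  unfolding pb_def by (meson order_trans)

lemma enc_nat_len[simp]: "length (enc_nat k) = Suc k" by (simp add: enc_nat_def)

lemma enc_gate_len: "(\<forall>i \<in> set (gate_args g). i < S) \<Longrightarrow> length (enc_gate g) \<le> 3 * Suc S"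
  by (cases g) auto

lemma sum_list_le: "(\<forall>x\<in>set xs. f x \<le> (S::nat)) \<Longrightarrow> sum_list (map f xs) \<le> length xs * S"
  by (induction xs) auto

lemma enc_len:
  assumes "circ_wf C"
  shows "length (enc_circuit C) \<le> 5 * Suc (csize C) * Suc (csize C)"
proof -
  let ?S = "csize C"
  have g: "\<forall>g \<in> set (cgates C). length (enc_gate g) \<le> 3 * Suc ?S"
  proof
    fix g assume "g \<in> set (cgates C)"
    then obtain j where j: "j < length (cgates C)" "g = cgates C ! j" by (metis in_set_conv_nth)
    have "\<forall>i \<in> set (gate_args g). i < cin C + j" using assms j by (auto simp: circ_wf_def)
    then have "\<forall>i \<in> set (gate_args g). i < ?S" using j by (auto simp: csize_def)
    then show "length (enc_gate g) \<le> 3 * Suc ?S" by (rule enc_gate_len)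
  qed
  have o: "\<forall>w \<in> set (couts C). length (enc_nat w) \<le> Suc ?S"
    using assms by (auto simp: circ_wf_def csize_def)
  have l1: "length (concat (map enc_gate (cgates C))) \<le> length (cgates C) * (3 * Suc ?S)"
    using sum_list_le[OF g] by (simp add: length_concat comp_def)
  have l2: "length (concat (map enc_nat (couts C))) \<le> length (couts C) * Suc ?S"
    using sum_list_le[OF o] by (simp add: length_concat comp_def)
  have "length (enc_circuit C) \<le> Suc (cin C) + Suc (length (cgates C)) + length (cgates C) * (3 * Suc ?S)
      + Suc (length (couts C)) + length (couts C) * Suc ?S"
    using l1 l2 by (simp add: enc_circuit_def)
  also have "\<dots> \<le> 5 * Suc ?S * Suc ?S"
  proof -
    have a: "cin C \<le> ?S" "length (cgates C) \<le> ?S" "length (couts C) \<le> ?S" by (auto simp: csize_def)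
    have "length (cgates C) * (3 * Suc ?S) \<le> ?S * (3 * Suc ?S)" using a by (intro mult_right_mono) auto
    moreover have "length (couts C) * Suc ?S \<le> ?S * Suc ?S" using a by (intro mult_right_mono) auto
    ultimately show ?thesis using a by (simp add: algebra_simps)
  qed
  finally show ?thesis .
qed


lemma card_filter_sum: "finite A \<Longrightarrow> real (card {a\<in>A. P a}) = (\<Sum>a\<in>A. if P a then 1 else 0)"
  by (simp add: sum.inter_filter[symmetric])

lemma finite_lists_len: "finite {xs :: bool list. length xs = n}"
  using finite_lists_length_eq[of "UNIV :: bool set" n] by simp

lemma card_lists_len: "card {xs :: bool list. length xs = n} = 2 ^ n"
  using card_lists_length_eq[of "UNIV :: bool set" n] by simp

lemma exists_other: "1 \<le> N \<Longrightarrow> length (y::bool list) = N \<Longrightarrow> \<exists>y'. length y' = N \<and> y' \<noteq> y"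
  by (rule exI[of _ "(\<not> hd y) # tl y"]) (cases y, auto)

lemma pow2m: "(2::real) ^ (2 * m) = 2 ^ m * 2 ^ m" by (simp add: mult_2 power_add)

lemma hash_marginal:
  assumes pw: "pairwise_indep k N m h"
    and hl: "\<forall>key y. length key = k \<longrightarrow> length y = N \<longrightarrow> length (h key y) = m"
    and N1: "1 \<le> N" and ly: "length y = N" and lz: "length z = m"
  shows "real (card {key. length key = k \<and> h key y = z}) = 2 ^ k / 2 ^ m"
proof -
  obtain y' where y': "length y' = N" "y' \<noteq> y" using exists_other[OF N1 ly] by blast
  let ?K = "{key :: bool list. length key = k}"
  let ?Z = "{z :: bool list. length z = m}"
  have fK: "finite ?K" and fZ: "finite ?Z" by (simp_all add: finite_lists_len)
  have "real (card {key. length key = k \<and> h key y = z}) = (\<Sum>key\<in>?K. if h key y = z then 1 else 0)"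
    using card_filter_sum[OF fK, of "\<lambda>key. h key y = z"] by simp
  also have "\<dots> = (\<Sum>key\<in>?K. \<Sum>z'\<in>?Z. if h key y = z \<and> h key y' = z' then 1 else 0)"
  proof (rule sum.cong[OF refl])
    fix key assume "key \<in> ?K"
    then have "h key y' \<in> ?Z" using hl y' by auto
    then show "(if h key y = z then 1 else 0) = (\<Sum>z'\<in>?Z. if h key y = z \<and> h key y' = z' then 1 else (0::real))"
      using fZ by (simp add: sum.delta)
  qed
  also have "\<dots> = (\<Sum>z'\<in>?Z. \<Sum>key\<in>?K. if h key y = z \<and> h key y' = z' then 1 else 0)"
    by (rule sum.swap)
  also have "\<dots> = (\<Sum>z'\<in>?Z. real (card {key. length key = k \<and> h key y = z \<and> h key y' = z'}))"
  proof (rule sum.cong[OF refl])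
    fix z' show "(\<Sum>key\<in>?K. if h key y = z \<and> h key y' = z' then 1 else 0) = real (card {key. length key = k \<and> h key y = z \<and> h key y' = z'})"
      using card_filter_sum[OF fK, of "\<lambda>key. h key y = z \<and> h key y' = z'"] by simp
  qed
  also have "\<dots> = (\<Sum>z'\<in>?Z. 2 ^ k / 2 ^ (2 * m))"
  proof (rule sum.cong[OF refl])
    fix z' assume "z' \<in> ?Z"
    then have "real (card {key. length key = k \<and> h key y = z \<and> h key y' = z'}) / 2 ^ k = 1 / 2 ^ (2 * m)"
      using pw y' ly lz unfolding pairwise_indep_def by (metis (mono_tags) mem_Collect_eq)
    then show "real (card {key. length key = k \<and> h key y = z \<and> h key y' = z'}) = 2 ^ k / 2 ^ (2 * m)"
      by (simp add: field_simps)
  qed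
  also have "\<dots> = 2 ^ m * (2 ^ k / 2 ^ (2 * m))" using card_lists_len[of m] by simp
  also have "\<dots> = 2 ^ k / 2 ^ m" unfolding pow2m by (simp add: field_simps)
  finally show ?thesis .
qed

lemma hash_pair:
  assumes pw: "pairwise_indep k N m h"
    and ly: "length y = N" and ly': "length y' = N" and ne: "y \<noteq> y'" and lz: "length z = m"
  shows "real (card {key. length key = k \<and> h key y = z \<and> h key y' = z}) = 2 ^ k / 2 ^ (2 * m)"
proof -
  have "real (card {key. length key = k \<and> h key y = z \<and> h key y' = z}) / 2 ^ k = 1 / 2 ^ (2 * m)"
    using pw ly ly' ne lz unfolding pairwise_indep_def by blast
  then show ?thesis by (simp add: field_simps)
qed

lemma hash_bad_z:
  assumes pw: "pairwise_indep k N m h"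
    and hl: "\<forall>key y. length key = k \<longrightarrow> length y = N \<longrightarrow> length (h key y) = m"
    and N1: "1 \<le> N" and lz: "length z = m"
    and TY: "Tset \<subseteq> {y. length y = N}" and tpos: "card Tset > 0"
  shows "real (card {key. length key = k \<and> (\<forall>y\<in>Tset. h key y \<noteq> z)}) \<le> 2 ^ k * 2 ^ m / real (card Tset)"
proof -
  let ?K = "{key :: bool list. length key = k}"
  have fK: "finite ?K" by (simp add: finite_lists_len)
  have fT: "finite Tset" using tpos card_ge_0_finite by blast
  define t where "t = real (card Tset)"
  have t0: "t > 0" using tpos by (simp add: t_def)
  define a where "a = (2::real) ^ k / 2 ^ m"
  define b where "b = (2::real) ^ k / 2 ^ (2 * m)"
  define mu where "mu = t / 2 ^ m"
  define ind where "ind = (\<lambda>key y. if h key y = z then 1 else (0::real))"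
  define X where "X = (\<lambda>key. \<Sum>y\<in>Tset. ind key y)"
  have cK: "real (card ?K) = 2 ^ k" using card_lists_len[of k] by simp
  have marg: "\<And>y. y \<in> Tset \<Longrightarrow> (\<Sum>key\<in>?K. ind key y) = a"
  proof -
    fix y assume "y \<in> Tset"
    then have ly: "length y = N" using TY by auto
    have "(\<Sum>key\<in>?K. ind key y) = real (card {key. length key = k \<and> h key y = z})"
      using card_filter_sum[OF fK, of "\<lambda>key. h key y = z"] by (simp add: ind_def)
    also have "\<dots> = a" using hash_marginal[OF pw hl N1 ly lz] by (simp add: a_def)
    finally show "(\<Sum>key\<in>?K. ind key y) = a" .
  qed
  have pair: "\<And>y y'. y \<in> Tset \<Longrightarrow> y' \<in> Tset \<Longrightarrow> (\<Sum>key\<in>?K. ind key y * ind key y') \<le> (if y' = y then a else 0) + b"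
  proof -
    fix y y' assume y: "y \<in> Tset" and y': "y' \<in> Tset"
    show "(\<Sum>key\<in>?K. ind key y * ind key y') \<le> (if y' = y then a else 0) + b"
    proof (cases "y' = y")
      case True
      have "(\<Sum>key\<in>?K. ind key y * ind key y') = (\<Sum>key\<in>?K. ind key y)"
        using True by (intro sum.cong) (auto simp: ind_def)
      then show ?thesis using marg[OF y] True by (simp add: b_def)
    next
      case False
      have "(\<Sum>key\<in>?K. ind key y * ind key y') = (\<Sum>key\<in>?K. if h key y = z \<and> h key y' = z then 1 else 0)"
        by (rule sum.cong) (auto simp: ind_def)
      also have "\<dots> = real (card {key. length key = k \<and> h key y = z \<and> h key y' = z})"
        using card_filter_sum[OF fK, of "\<lambda>key. h key y = z \<and> h key y' = z"] by simp
      also have "\<dots> = b" using hash_pair[OF pw _ _ _ lz, of y y'] y y' TY False by (auto simp: b_def)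
      finally show ?thesis using False by simp
    qed
  qed
  have sumX: "(\<Sum>key\<in>?K. X key) = t * a"
  proof -
    have "(\<Sum>key\<in>?K. X key) = (\<Sum>y\<in>Tset. \<Sum>key\<in>?K. ind key y)"
      unfolding X_def by (rule sum.swap)
    also have "\<dots> = (\<Sum>y\<in>Tset. a)" using marg by simp
    finally show ?thesis by (simp add: t_def)
  qed
  have sumX2: "(\<Sum>key\<in>?K. (X key)\<^sup>2) \<le> t * a + t * t * b"
  proof -
    have "(\<Sum>key\<in>?K. (X key)\<^sup>2) = (\<Sum>key\<in>?K. \<Sum>y\<in>Tset. \<Sum>y'\<in>Tset. ind key y * ind key y')"
      unfolding X_def power2_eq_square by (simp add: sum_product)
    also have "\<dots> = (\<Sum>y\<in>Tset. \<Sum>key\<in>?K. \<Sum>y'\<in>Tset. ind key y * ind key y')"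
      by (rule sum.swap)
    also have "\<dots> = (\<Sum>y\<in>Tset. \<Sum>y'\<in>Tset. \<Sum>key\<in>?K. ind key y * ind key y')"
      by (intro sum.cong[OF refl] sum.swap)
    also have "\<dots> \<le> (\<Sum>y\<in>Tset. \<Sum>y'\<in>Tset. (if y' = y then a else 0) + b)"
      by (intro sum_mono pair)
    also have "\<dots> = (\<Sum>y\<in>Tset. a + t * b)"
      using fT by (simp add: sum.distrib sum.delta t_def)
    also have "\<dots> = t * a + t * t * b" by (simp add: t_def algebra_simps)
    finally show ?thesis .
  qed
  have var: "(\<Sum>key\<in>?K. (X key - mu)\<^sup>2) \<le> t * a"
  proof -
    have "(\<Sum>key\<in>?K. (X key - mu)\<^sup>2) = (\<Sum>key\<in>?K. (X key)\<^sup>2) - 2 * mu * (\<Sum>key\<in>?K. X key) + real (card ?K) * mu\<^sup>2"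
      by (simp add: power2_diff sum.distrib sum_subtractf sum_distrib_left algebra_simps)
    also have "\<dots> \<le> t * a + t * t * b - 2 * mu * (t * a) + 2 ^ k * mu\<^sup>2"
      using sumX2 sumX cK by simp
    also have "\<dots> = t * a"
      unfolding a_def b_def mu_def pow2m by (simp add: power2_eq_square field_simps)
    finally show ?thesis .
  qed
  let ?bad = "{key. length key = k \<and> (\<forall>y\<in>Tset. h key y \<noteq> z)}"
  have badK: "?bad \<subseteq> ?K" by auto
  have Xbad: "\<And>key. key \<in> ?bad \<Longrightarrow> X key = 0" by (simp add: X_def ind_def)
  have "real (card ?bad) * mu\<^sup>2 = (\<Sum>key\<in>?bad. (X key - mu)\<^sup>2)"
    using Xbad by simp
  also have "\<dots> \<le> (\<Sum>key\<in>?K. (X key - mu)\<^sup>2)"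
    by (rule sum_mono2[OF fK badK]) auto
  also have "\<dots> \<le> t * a" by (rule var)
  finally have "real (card ?bad) * mu\<^sup>2 \<le> t * a" .
  moreover have "mu\<^sup>2 > 0" using t0 by (simp add: mu_def)
  ultimately have "real (card ?bad) \<le> t * a / mu\<^sup>2" by (simp add: field_simps)
  also have "t * a / mu\<^sup>2 = 2 ^ k * 2 ^ m / t"
    using t0 by (simp add: a_def mu_def power2_eq_square field_simps)
  finally show ?thesis by (simp add: t_def)
qed

lemma hash_cover:
  assumes pw: "pairwise_indep k N m h"
    and hl: "\<forall>key y. length key = k \<longrightarrow> length y = N \<longrightarrow> length (h key y) = m"
    and N1: "1 \<le> N"
    and TY: "Tset \<subseteq> {y. length y = N}" and big: "real (card Tset) > 2 ^ (2 * m)"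
  shows "\<exists>key. length key = k \<and> (\<forall>z. length z = m \<longrightarrow> (\<exists>y\<in>Tset. h key y = z))"
proof (rule ccontr)
  assume nc: "\<not> ?thesis"
  let ?K = "{key :: bool list. length key = k}"
  let ?Z = "{z :: bool list. length z = m}"
  let ?bad = "\<lambda>z. {key. length key = k \<and> (\<forall>y\<in>Tset. h key y \<noteq> z)}"
  have tpos: "card Tset > 0" using big by (metis of_nat_0 not_gr0 zero_less_power zero_less_numeral less_asym)
  have "?K \<subseteq> (\<Union>z\<in>?Z. ?bad z)" using nc by blast
  then have "real (card ?K) \<le> real (card (\<Union>z\<in>?Z. ?bad z))"
    by (intro of_nat_mono card_mono) (auto simp: finite_lists_len)
  also have "\<dots> \<le> real (\<Sum>z\<in>?Z. card (?bad z))"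
    by (intro of_nat_mono card_UN_le) (simp add: finite_lists_len)
  also have "\<dots> = (\<Sum>z\<in>?Z. real (card (?bad z)))" by simp
  also have "\<dots> \<le> (\<Sum>z\<in>?Z. 2 ^ k * 2 ^ m / real (card Tset))"
    by (intro sum_mono hash_bad_z[OF pw hl N1 _ TY tpos]) auto
  also have "\<dots> = 2 ^ m * (2 ^ k * 2 ^ m / real (card Tset))" using card_lists_len[of m] by simp
  also have "\<dots> < 2 ^ k"
  proof -
    have "2 ^ m * (2 ^ k * 2 ^ m) < (2::real) ^ k * real (card Tset)"
      using big unfolding pow2m by (simp add: field_simps)
    then show ?thesis using tpos by (simp add: field_simps)
  qed
  finally show False using card_lists_len[of k] by simp
qed


theorem theorem1p2:
  fixes N m kl :: "nat \<Rightarrow> nat"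
    and G :: "nat \<Rightarrow> bool list \<Rightarrow> bool list"
    and Gc Hc :: "nat \<Rightarrow> circuit"
    and M :: ntm
  assumes "demi_bits N G"
    and "\<forall>n. computes (Gc n) n (N n) (G n)"
    and "poly_bounded (\<lambda>n. csize (Gc n))"
    and "\<forall>n. circ_wf (Hc n) \<and> cin (Hc n) = kl n + N n \<and> length (couts (Hc n)) = m n"
    and "poly_bounded (\<lambda>n. csize (Hc n))"
    and "poly_bounded kl"
    and "\<forall>n. pairwise_indep (kl n) (N n) (m n) (\<lambda>key y. ceval (Hc n) (key @ y))"
    and "ntm M"
    and "ntm_poly_time M"
    and "\<forall>\<^sub>F n in sequentially. N n > 10 * m n \<and> m n > n"
  shows "\<forall>\<^sub>F n in sequentially.
           \<exists>key. length key = kl n \<and> \<not> solves_avoid M (plug (Gc n) (Hc n) key)"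
proof (rule ccontr)
  note demi = assms(1) and compG = assms(2) and pbG = assms(3) and Hn = assms(4)
    and pbH = assms(5) and pbk = assms(6) and pwi = assms(7) and ntmM = assms(8)
    and ptime = assms(9) and evN = assms(10)
  assume "\<not> ?thesis"
  then have freq: "\<exists>\<^sub>F n in sequentially. \<forall>key. length key = kl n \<longrightarrow> solves_avoid M (plug (Gc n) (Hc n) key)"
    by (simp add: frequently_def)
  obtain cM where cM: "\<forall>x t cf. (ntm_step M ^^ t) (ntm_init M x) cf \<longrightarrow> t \<le> cM * length x ^ cM + cM"
    using ptime by (auto simp: ntm_poly_time_def)
  obtain ds where ds: "set ds = delta M" using ntmM finite_list by (auto simp: ntm_def)
  define qs where "qs = q0 M # qacc M # map tq' ds"
  define ss where "ss = (0::nat) # 1 # 2 # map tw ds"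
  define Lf where "Lf n = length (epre (Gc n) (Hc n) (kl n)) + 2 * kl n + length (epost (Gc n) (Hc n) (kl n))" for n
  define Tf where "Tf n = cM * Lf n ^ cM + cM" for n
  define Pf where "Pf n = Lf n + Tf n + m n + 2" for n
  define eb where "eb n = ebitF (epre (Gc n) (Hc n) (kl n)) (epost (Gc n) (Hc n) (kl n)) (kl n) (N n)" for n
  define ek where "ek n = (\<lambda>key. enc_circuit (plug (Gc n) (Hc n) key))" for n
  define D where "D n = dsim.Dc M ds qs ss (Pf n) (N n) (kl n) (Hc n) (Tf n) (Lf n) (m n) (eb n)" for n
  define Wf where "Wf n = kl n + Tf n * length ds" for n
  have simI: "sim M ds qs ss"
    by unfold_locales (auto simp: ds qs_def ss_def)
  have ekl: "length key = kl n \<Longrightarrow> length (ek n key) = Lf n" for n key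
    by (simp add: ek_def Lf_def enc_plug)
  have inst: "dsim M ds qs ss (Pf n) (N n) (kl n) (Hc n) (Tf n) (Lf n) (m n) (eb n) (ek n)" for n
  proof -
    have "dsim_axioms (Pf n) (N n) (kl n) (Hc n) (Tf n) (Lf n) (m n) (eb n) (ek n)"
    proof
      show "circ_wf (Hc n)" "cin (Hc n) = kl n + N n" "length (couts (Hc n)) = m n" using Hn by auto
      show "Tf n < Pf n" "Lf n \<le> Pf n" "m n < Pf n" by (auto simp: Pf_def)
      show "\<forall>key. length key = kl n \<longrightarrow> length (ek n key) = Lf n" using ekl by blast
      show "\<forall>i<Lf n. fok (N n + kl n) (eb n i)" by (simp add: eb_def ebitF_fok)
      show "\<forall>xin::bool list. N n + kl n \<le> length xin \<longrightarrow>
         (\<forall>i<Lf n. feval xin (eb n i) = ek n (take (kl n) (drop (N n) xin)) ! i)"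
      proof (intro allI impI)
        fix xin :: "bool list" and i assume lx: "N n + kl n \<le> length xin" and i: "i < Lf n"
        define key where "key = take (kl n) (drop (N n) xin)"
        have lk: "length key = kl n" using lx by (simp add: key_def)
        have kx: "\<forall>j<kl n. xin ! (N n + j) = key ! j" using lx by (simp add: key_def)
        show "feval xin (eb n i) = ek n (take (kl n) (drop (N n) xin)) ! i"
          using ebitF_ok[OF lk kx] lk by (simp add: eb_def ek_def enc_plug key_def[symmetric])
      qed
    qed
    then show ?thesis using simI by (simp add: dsim_def)
  qed
  have Tb: "\<forall>key t cf. length key = kl n \<longrightarrow> (ntm_step M ^^ t) (ntm_init M (ek n key)) cf \<longrightarrow> t \<le> Tf n" for n
  proof (intro allI impI)
    fix key t cf assume lk: "length key = kl n" and r: "(ntm_step M ^^ t) (ntm_init M (ek n key)) cf"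
    have "t \<le> cM * length (ek n key) ^ cM + cM" using cM r by blast
    then show "t \<le> Tf n" using ekl[OF lk] by (simp add: Tf_def)
  qed
  have acc: "nd_accepts (D n) (Wf n) y \<longleftrightarrow>
      (\<exists>key. length key = kl n \<and> ntm_accepts_with M (ek n key) (ceval (Hc n) (key @ y)))"
    if "length y = N n" for n y
    using dsim.Dc_accepts[OF inst that Tb] by (simp add: D_def Wf_def)
  have A1: "\<forall>n. circ_wf (D n) \<and> cin (D n) = N n + Wf n \<and> length (couts (D n)) = 1"
    using dsim.Dc_wf[OF inst] dsim.Dc_cin[OF inst] dsim.Dc_couts[OF inst] by (simp add: D_def Wf_def)
  have A2: "poly_bounded (\<lambda>n. csize (D n))"
  proof -
    have pbG': "pb (\<lambda>n. csize (Gc n))" using poly_bounded_pb[OF pbG] .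
    have pbH': "pb (\<lambda>n. csize (Hc n))" using poly_bounded_pb[OF pbH] .
    have pbk': "pb kl" using poly_bounded_pb[OF pbk] .
    have pbN: "pb N"
    proof (rule pb_mono[OF _ pbG'], intro allI)
      fix n have "length (couts (Gc n)) = N n" using compG by (simp add: computes_def)
      then show "N n \<le> csize (Gc n)" by (simp add: csize_def)
    qed
    have pbm: "pb m"
    proof (rule pb_mono[OF _ pbH'], intro allI)
      fix n show "m n \<le> csize (Hc n)" using Hn by (simp add: csize_def)
    qed
    have pbgH: "pb (\<lambda>n. length (cgates (Hc n)))"
      by (rule pb_mono[OF _ pbH']) (simp add: csize_def)
    have Lb: "\<forall>n. Lf n \<le> 5 * (csize (Gc n) + kl n + csize (Hc n) + 1) * (csize (Gc n) + kl n + csize (Hc n) + 1)"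
    proof
      fix n
      define key where "key = replicate (kl n) False"
      have cG: "computes (Gc n) n (N n) (G n)" using compG by blast
      have wG: "circ_wf (Gc n)" and ciG: "cin (Gc n) = n" and coG: "length (couts (Gc n)) = N n"
        using cG by (auto simp: computes_def)
      have wH: "circ_wf (Hc n)" and ciH: "cin (Hc n) = kl n + N n" using Hn by auto
      have lk: "length key = kl n" by (simp add: key_def)
      have wP: "circ_wf (plug (Gc n) (Hc n) key)"
        using plug_correct(4)[OF wG wH, of key "replicate n False"] ciH coG ciG lk by simp
      have LfE: "Lf n = length (enc_circuit (plug (Gc n) (Hc n) key))"
        using ekl[OF lk] by (simp add: ek_def)
      have cs: "csize (plug (Gc n) (Hc n) key) \<le> csize (Gc n) + kl n + csize (Hc n)"
        using lk by (simp add: csize_def plugeq)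
      have "Lf n \<le> 5 * Suc (csize (plug (Gc n) (Hc n) key)) * Suc (csize (plug (Gc n) (Hc n) key))"
        using enc_len[OF wP] LfE by simp
      also have "\<dots> \<le> 5 * (csize (Gc n) + kl n + csize (Hc n) + 1) * (csize (Gc n) + kl n + csize (Hc n) + 1)"
        using cs by (intro mult_mono) auto
      finally show "Lf n \<le> 5 * (csize (Gc n) + kl n + csize (Hc n) + 1) * (csize (Gc n) + kl n + csize (Hc n) + 1)" .
    qed
    have pbL: "pb Lf"
      by (rule pb_mono[OF Lb]) (intro pb_mult pb_add pb_const pbG' pbH' pbk')
    have pbT: "pb Tf" unfolding Tf_def[abs_def]
      by (intro pb_mult pb_add pb_pow pb_const pbL)
    have pbP: "pb Pf" unfolding Pf_def[abs_def]
      by (intro pb_add pb_const pbL pbT pbm)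
    have ebs: "\<forall>i<Lf n. fsize (eb n i) = 1" for n by (simp add: eb_def ebitF_size)
    have bnd: "\<forall>n. csize (D n) \<le> N n + kl n + Tf n * length ds + length (cgates (Hc n)) + 3 * (length qs + Pf n + Pf n * length ss)
       + Tf n * ((length qs + Pf n + Pf n * length ss) * ((4 * (Pf n + length ds + length qs + length ss + 1)) ^ 10 + 1))
       + (4 * (Pf n + length ds + length qs + length ss + 1)) ^ 6 + 2"
    proof
      fix n
      show "csize (D n) \<le> N n + kl n + Tf n * length ds + length (cgates (Hc n)) + 3 * (length qs + Pf n + Pf n * length ss)
       + Tf n * ((length qs + Pf n + Pf n * length ss) * ((4 * (Pf n + length ds + length qs + length ss + 1)) ^ 10 + 1))
       + (4 * (Pf n + length ds + length qs + length ss + 1)) ^ 6 + 2"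
        using dsim.csize_Dc[OF inst ebs, of n] by (simp only: D_def sim.B_def[OF simI] sim.Ks_def[OF simI] sim.Zs_def[OF simI])
    qed
    have "pb (\<lambda>n. csize (D n))"
      by (rule pb_mono[OF bnd]) (intro pb_mult pb_add pb_pow pb_const pbP pbT pbN pbk' pbgH)
    then show ?thesis by (rule pb_poly_bounded)
  qed
  have ev: "\<forall>\<^sub>F n in sequentially.
           \<not> (real (card {y. length y = N n \<and> nd_accepts (D n) (Wf n) y}) \<ge> (1/3) * 2 ^ N n \<and>
              (\<forall>x. length x = n \<longrightarrow> \<not> nd_accepts (D n) (Wf n) (G n x)))"
    using demi A1 A2 unfolding demi_bits_def by blast
  have "\<exists>\<^sub>F n in sequentially. (\<forall>key. length key = kl n \<longrightarrow> solves_avoid M (plug (Gc n) (Hc n) key)) \<and>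
      ((N n > 10 * m n \<and> m n > n) \<and> \<not> (real (card {y. length y = N n \<and> nd_accepts (D n) (Wf n) y}) \<ge> (1/3) * 2 ^ N n \<and>
              (\<forall>x. length x = n \<longrightarrow> \<not> nd_accepts (D n) (Wf n) (G n x))))"
    by (rule frequently_eventually_frequently[OF freq eventually_conj[OF evN ev]])
  then have "\<exists>n. (\<forall>key. length key = kl n \<longrightarrow> solves_avoid M (plug (Gc n) (Hc n) key)) \<and>
      ((N n > 10 * m n \<and> m n > n) \<and> \<not> (real (card {y. length y = N n \<and> nd_accepts (D n) (Wf n) y}) \<ge> (1/3) * 2 ^ N n \<and>
              (\<forall>x. length x = n \<longrightarrow> \<not> nd_accepts (D n) (Wf n) (G n x))))"
    by (rule frequently_ex)
  then obtain n where bad: "\<forall>key. length key = kl n \<longrightarrow> solves_avoid M (plug (Gc n) (Hc n) key)"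
    and Nm: "N n > 10 * m n" "m n > n"
    and nev: "\<not> (real (card {y. length y = N n \<and> nd_accepts (D n) (Wf n) y}) \<ge> (1/3) * 2 ^ N n \<and>
              (\<forall>x. length x = n \<longrightarrow> \<not> nd_accepts (D n) (Wf n) (G n x)))"
    by blast
  have cG: "computes (Gc n) n (N n) (G n)" using compG by blast
  have wG: "circ_wf (Gc n)" and ciG: "cin (Gc n) = n" and coG: "length (couts (Gc n)) = N n"
    and evG: "\<forall>x. length x = n \<longrightarrow> ceval (Gc n) x = G n x"
    using cG by (auto simp: computes_def)
  have wH: "circ_wf (Hc n)" and ciH: "cin (Hc n) = kl n + N n" and coH: "length (couts (Hc n)) = m n"
    using Hn by auto
  have plugev: "length key = kl n \<Longrightarrow> length x = n \<Longrightarrow> ceval (plug (Gc n) (Hc n) key) x = ceval (Hc n) (key @ G n x)" for key x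
    using plug_correct(1)[OF wG wH, of key x] ciH coG ciG evG by simp
  have lG: "length x = n \<Longrightarrow> length (G n x) = N n" for x
    using evG coG by (metis ceval_def length_map)
  have part1: "\<forall>x. length x = n \<longrightarrow> \<not> nd_accepts (D n) (Wf n) (G n x)"
  proof (intro allI impI notI)
    fix x assume lx: "length x = n" and a: "nd_accepts (D n) (Wf n) (G n x)"
    then obtain key where lk: "length key = kl n"
      and r: "ntm_accepts_with M (ek n key) (ceval (Hc n) (key @ G n x))"
      using acc[OF lG[OF lx]] by blast
    have "solves_avoid M (plug (Gc n) (Hc n) key)" using bad lk by blast
    then have "ceval (Hc n) (key @ G n x) \<notin> crange (plug (Gc n) (Hc n) key)"
      using r by (simp add: solves_avoid_def ek_def)
    moreover have "ceval (Hc n) (key @ G n x) \<in> crange (plug (Gc n) (Hc n) key)"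
    proof -
      have e1: "ceval (plug (Gc n) (Hc n) key) x = ceval (Hc n) (key @ G n x)" using plugev[OF lk lx] .
      have e2: "cin (plug (Gc n) (Hc n) key) = n"
        using plug_correct(2)[OF wG wH, of key x] ciH coG ciG lk lx by simp
      show ?thesis unfolding crange_def using e1 e2 lx by (intro CollectI exI[of _ x]) simp
    qed
    ultimately show False by blast
  qed
  have part2: "real (card {y. length y = N n \<and> nd_accepts (D n) (Wf n) y}) \<ge> (1/3) * 2 ^ N n"
  proof (rule ccontr)
    assume small: "\<not> ?thesis"
    define Acc where "Acc = {y. length y = N n \<and> nd_accepts (D n) (Wf n) y}"
    define Ts where "Ts = {y. length y = N n \<and> \<not> nd_accepts (D n) (Wf n) y}"
    have fY: "finite {y :: bool list. length y = N n}" by (rule finite_lists_len)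
    have fA: "finite Acc" by (rule rev_finite_subset[OF fY]) (auto simp: Acc_def)
    have fT: "finite Ts" by (rule rev_finite_subset[OF fY]) (auto simp: Ts_def)
    have U: "Acc \<union> Ts = {y :: bool list. length y = N n}" by (auto simp: Acc_def Ts_def)
    have Id: "Acc \<inter> Ts = {}" by (auto simp: Acc_def Ts_def)
    have "card Acc + card Ts = card {y :: bool list. length y = N n}"
      using card_Un_disjoint[OF fA fT Id] U by simp
    then have cs: "real (card Acc) + real (card Ts) = 2 ^ N n" using card_lists_len[of "N n"]
      by (metis of_nat_add of_nat_numeral of_nat_power)
    have cA: "real (card Acc) < (1/3) * 2 ^ N n" using small by (simp add: Acc_def)
    have N2: "2 * m n + 1 \<le> N n" using Nm by linarith
    have "(2::real) ^ (2 * m n + 1) \<le> 2 ^ N n" using N2 by (intro power_increasing) auto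
    then have p2: "(2::real) ^ (2 * m n) * 2 \<le> 2 ^ N n" by simp
    have p0: "0 \<le> (2::real) ^ (2 * m n)" by simp
    have big: "real (card Ts) > 2 ^ (2 * m n)" using cs cA p2 p0 by linarith
    have hl: "\<forall>key y. length key = kl n \<longrightarrow> length y = N n \<longrightarrow> length (ceval (Hc n) (key @ y)) = m n"
      using coH by (simp add: ceval_def)
    have N1: "1 \<le> N n" using Nm by linarith
    obtain key where lk: "length key = kl n"
      and cover: "\<forall>z. length z = m n \<longrightarrow> (\<exists>y\<in>Ts. ceval (Hc n) (key @ y) = z)"
      using hash_cover[OF pwi[rule_format, of n] hl N1 _ big] by (auto simp: Ts_def)
    have sa: "solves_avoid M (plug (Gc n) (Hc n) key)" using bad lk by blast
    then obtain z0 where z0: "ntm_accepts_with M (enc_circuit (plug (Gc n) (Hc n) key)) z0"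
      by (auto simp: solves_avoid_def)
    have "length z0 = length (couts (plug (Gc n) (Hc n) key))" using sa z0 by (auto simp: solves_avoid_def)
    also have "\<dots> = m n" using plug_correct(3)[OF wG wH, of key "replicate n False"] ciH coG ciG lk coH by simp
    finally obtain y where y: "y \<in> Ts" "ceval (Hc n) (key @ y) = z0" using cover by blast
    then have "nd_accepts (D n) (Wf n) y" using acc[of y n] lk z0 by (auto simp: Ts_def ek_def)
    then show False using y by (simp add: Ts_def)
  qed
  show False using nev part1 part2 by blast
qed


end
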